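(* Assume the setting and algorithm described in the context. If $0<\alpha\le\frac{\sqrt n}{\sqrt{8m}\,L}$, then for all $k\ge0$, almost surely, $$\mathbb E\big[\|g^{k+1}-\nabla\mathbf f(x^{k+1})\|^2\,|\,\mathcal F^k\big]\le 8.5L^2\|x^k-Jx^k\|^2+4nL^2t^k+6n\alpha^2L^2\|\overline{\nabla\mathbf f}(x^k)\|^2+4\alpha^2L^2\,\mathbb E\big[\|y^{k+1}-Jy^{k+1}\|^2\,|\,\mathcal F^k\big].$$
   Context: Setting. Let $n,m,p\ge1$ be integers and $\mathcal V=\{1,\dots,n\}$. For each $i\in\mathcal V$ and $j\in\{1,\dots,m\}$, $f_{i,j}:\mathbb R^p\to\mathbb R$ is differentiable and $L$-smooth for some $L>0$, i.e. $\|\nabla f_{i,j}(x)-\nabla f_{i,j}(y)\|\le L\|x-y\|$ for all $x,y\in\mathbb R^p$. Let $f_i:=\frac1m\sum_{j=1}^m f_{i,j}$ and $F:=\frac1n\sum_{i=1}^n f_i$, and assume $F^*:=\inf_{x\in\mathbb R^p}F(x)>-\infty$. Let $\underline W=(\underline w_{ir})\in\mathbb R^{n\times n}$ be a nonnegative, primitive, doubly stochastic matrix ($\underline W\mathbf 1_n=\mathbf 1_n$, $\mathbf 1_n^\top\underline W=\mathbf 1_n^\top$), and let $\lambda\in[0,1)$ be its second largest singular value. Any expression with $\lambda$ in a denominator is read as $+\infty$ when $\lambda=0$. Algorithm GT-SAGA with step-size $\alpha>0$: fix a deterministic $\bar x^0\in\mathbb R^p$; for all $i\in\mathcal V$ set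 $x_i^0=\bar x^0$, $z_{i,j}^0=x_i^0$ for all $j$, $y_i^0=0$, $g_i^{-1}=0$. For $k=0,1,2,\dots$ and every $i\in\mathcal V$: draw $\tau_i^k$ uniformly from $\{1,\dots,m\}$; set $g_i^k=\nabla f_{i,\tau_i^k}(x_i^k)-\nabla f_{i,\tau_i^k}(z_{i,\tau_i^k}^k)+\frac1m\sum_{j=1}^m\nabla f_{i,j}(z_{i,j}^k)$; set $y_i^{k+1}=\sum_{r=1}^n\underline w_{ir}(y_r^k+g_r^k-g_r^{k-1})$; set $x_i^{k+1}=\sum_{r=1}^n\underline w_{ir}(x_r^k-\alpha y_r^{k+1})$; draw $s_i^k$ uniformly from $\{1,\dots,m\}$; set $z_{i,j}^{k+1}=x_i^k$ if $j=s_i^k$ and $z_{i,j}^{k+1}=z_{i,j}^k$ otherwise. The family $\{\tau_i^k,s_i^k: i\in\mathcal V,k\ge0\}$ is independent. Notation. $x^k,y^k,g^k\in\mathbb R^{np}$ stack the $x_i^k$, $y_i^k$, $g_i^k$; $\nabla\mathbf f(x^k)\in\mathbb R^{np}$ stacks $\nabla f_i(x_i^k)$, $i=1,\dots,n$; $W=\underline W\otimes I_p$, $J=(\frac1n\mathbf 1_n\mathbf 1_n^\top)\otimes I_p$; $\bar x^k=\frac1n\sum_i x_i^k$, $\bar g^k=\frac1n\sum_i g_i^k$, $\overline{\nabla\mathbf f}(x^k)=\frac1n\sum_i\nabla f_i(x_i^k)$. $\mathcal F^0$ is the trivial $\sigma$-algebra and $\mathcal F^k=\sigma(\{\tau_i^t,s_i^t:i\in\mathcal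 V,\ t\le k-1\})$ for $k\ge1$. $t^k:=\frac1n\sum_{i=1}^n\frac1m\sum_{j=1}^m\|\bar x^k-z_{i,j}^k\|^2$. $\|\nabla\mathbf f(x^0)\|^2:=\sum_{i=1}^n\|\nabla f_i(\bar x^0)\|^2$. Norms are Euclidean (spectral for matrices); vector and matrix inequalities are entrywise. *)

theory Defs
  imports "HOL-Probability.Probability" "HOL-Probability.Conditional_Expectation"
begin

fun matpow :: "nat \<Rightarrow> (nat \<Rightarrow> nat \<Rightarrow> real) \<Rightarrow> nat \<Rightarrow> nat \<Rightarrow> nat \<Rightarrow> real" where
  "matpow n W 0 = (\<lambda>i j. if i = j then 1 else 0)"
| "matpow n W (Suc k) = (\<lambda>i j. \<Sum>r<n. matpow n W k i r * W r j)"

definition nonneg_mat :: "nat \<Rightarrow> (nat \<Rightarrow> nat \<Rightarrow> real) \<Rightarrow> bool" where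
  "nonneg_mat n W \<longleftrightarrow> (\<forall>i<n. \<forall>j<n. W i j \<ge> 0)"

definition doubly_stochastic :: "nat \<Rightarrow> (nat \<Rightarrow> nat \<Rightarrow> real) \<Rightarrow> bool" where
  "doubly_stochastic n W \<longleftrightarrow> (\<forall>i<n. (\<Sum>r<n. W i r) = 1) \<and> (\<forall>r<n. (\<Sum>i<n. W i r) = 1)"

definition primitive_mat :: "nat \<Rightarrow> (nat \<Rightarrow> nat \<Rightarrow> real) \<Rightarrow> bool" where
  "primitive_mat n W \<longleftrightarrow> (\<exists>k. \<forall>i<n. \<forall>j<n. matpow n W k i j > 0)"

(* local SAGA gradient estimator g_i^k, given the current iterates x, the table z and the
   sampled indices tk (tk i = tau_i^k); component indices are 0..m-1 *)
definition gvec :: "(nat \<Rightarrow> nat \<Rightarrow> 'v \<Rightarrow> 'v::euclidean_space) \<Rightarrow> nat \<Rightarrow>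
    (nat \<Rightarrow> nat \<Rightarrow> 'v) \<Rightarrow> (nat \<Rightarrow> 'v) \<Rightarrow> (nat \<Rightarrow> nat) \<Rightarrow> nat \<Rightarrow> 'v" where
  "gvec grad m z x tk i =
     grad i (tk i) (x i) - grad i (tk i) (z i (tk i)) + (1 / real m) *\<^sub>R (\<Sum>j<m. grad i j (z i j))"

(* GT-SAGA state at iteration k: (x^k, y^k, g^{k-1}, z^k); T k i = tau_i^k, S k i = s_i^k *)
primrec gts :: "(nat \<Rightarrow> nat \<Rightarrow> 'v \<Rightarrow> 'v::euclidean_space) \<Rightarrow> (nat \<Rightarrow> nat \<Rightarrow> real) \<Rightarrow> nat \<Rightarrow> nat \<Rightarrow>
    real \<Rightarrow> 'v \<Rightarrow> (nat \<Rightarrow> nat \<Rightarrow> nat) \<Rightarrow> (nat \<Rightarrow> nat \<Rightarrow> nat) \<Rightarrow> nat \<Rightarrow>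
    (nat \<Rightarrow> 'v) \<times> (nat \<Rightarrow> 'v) \<times> (nat \<Rightarrow> 'v) \<times> (nat \<Rightarrow> nat \<Rightarrow> 'v)" where
  "gts grad W n m \<alpha> x0 T S 0 = ((\<lambda>i. x0), (\<lambda>i. 0), (\<lambda>i. 0), (\<lambda>i j. x0))"
| "gts grad W n m \<alpha> x0 T S (Suc k) =
     (case gts grad W n m \<alpha> x0 T S k of (x, y, gp, z) \<Rightarrow>
        let g = gvec grad m z x (T k);
            y' = (\<lambda>i. \<Sum>r<n. W i r *\<^sub>R (y r + g r - gp r));
            x' = (\<lambda>i. \<Sum>r<n. W i r *\<^sub>R (x r - \<alpha> *\<^sub>R y' r));
            z' = (\<lambda>i j. if j = S k i then x i else z i j)
        in (x', y', g, z'))"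

definition gt_x where "gt_x grad W n m \<alpha> x0 T S k = fst (gts grad W n m \<alpha> x0 T S k)"
definition gt_y where "gt_y grad W n m \<alpha> x0 T S k = fst (snd (gts grad W n m \<alpha> x0 T S k))"
definition gt_z where "gt_z grad W n m \<alpha> x0 T S k = snd (snd (snd (gts grad W n m \<alpha> x0 T S k)))"
definition gt_g where "gt_g grad W n m \<alpha> x0 T S k =
   gvec grad m (gt_z grad W n m \<alpha> x0 T S k) (gt_x grad W n m \<alpha> x0 T S k) (T k)"

(* mean of a stacked vector, and ||v - J v||^2 *)
definition avg :: "nat \<Rightarrow> (nat \<Rightarrow> 'v::real_vector) \<Rightarrow> 'v" where
  "avg n v = (1 / real n) *\<^sub>R (\<Sum>i<n. v i)"

definition cons_err :: "nat \<Rightarrow> (nat \<Rightarrow> 'v::real_normed_vector) \<Rightarrow> real" where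
  "cons_err n v = (\<Sum>i<n. (norm (v i - avg n v))\<^sup>2)"

definition grad_loc :: "(nat \<Rightarrow> nat \<Rightarrow> 'v \<Rightarrow> 'v::real_vector) \<Rightarrow> nat \<Rightarrow> nat \<Rightarrow> 'v \<Rightarrow> 'v" where
  "grad_loc grad m i x = (1 / real m) *\<^sub>R (\<Sum>j<m. grad i j x)"

definition t_gap :: "nat \<Rightarrow> nat \<Rightarrow> (nat \<Rightarrow> 'v::real_normed_vector) \<Rightarrow> (nat \<Rightarrow> nat \<Rightarrow> 'v) \<Rightarrow> real" where
  "t_gap n m x z = (1 / real n) * (\<Sum>i<n. (1 / real m) * (\<Sum>j<m. (norm (avg n x - z i j))\<^sup>2))"

(* F^k = sigma{tau_i^t, s_i^t : i in V, t <= k-1}; trivial for k = 0 *)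
definition filt :: "'w measure \<Rightarrow> (nat \<Rightarrow> nat \<Rightarrow> 'w \<Rightarrow> nat) \<Rightarrow> (nat \<Rightarrow> nat \<Rightarrow> 'w \<Rightarrow> nat) \<Rightarrow> nat \<Rightarrow> nat \<Rightarrow> 'w measure" where
  "filt M tau s n k = sigma (space M)
     (\<Union>t<k. \<Union>i<n. {tau t i -` A \<inter> space M | A. True} \<union> {s t i -` A \<inter> space M | A. True})"

end

theory Submission
  imports Defs
begin

lemma wvar:
  fixes w :: "'a \<Rightarrow> 'v::real_inner"
  assumes "finite A" "(\<Sum>a\<in>A. c a) = 1"
  shows "(\<Sum>a\<in>A. c a * (norm (w a - (\<Sum>b\<in>A. c b *\<^sub>R w b)))\<^sup>2)
       = (\<Sum>a\<in>A. c a * (norm (w a))\<^sup>2) - (norm (\<Sum>b\<in>A. c b *\<^sub>R w b))\<^sup>2"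
proof -
  define mu where "mu = (\<Sum>b\<in>A. c b *\<^sub>R w b)"
  have e: "(norm (w a - mu))\<^sup>2 = (norm (w a))\<^sup>2 - 2 * (w a \<bullet> mu) + (norm mu)\<^sup>2" for a
    by (simp add: power2_norm_eq_inner inner_diff_left inner_diff_right inner_commute)
  have "(\<Sum>a\<in>A. c a * (norm (w a - mu))\<^sup>2)
      = (\<Sum>a\<in>A. c a * (norm (w a))\<^sup>2) - 2 * (\<Sum>a\<in>A. c a * (w a \<bullet> mu)) + (\<Sum>a\<in>A. c a) * (norm mu)\<^sup>2"
    by (simp add: e algebra_simps sum.distrib sum_subtractf sum_distrib_left sum_distrib_right)
  also have "(\<Sum>a\<in>A. c a * (w a \<bullet> mu)) = mu \<bullet> mu"
    unfolding mu_def by (simp add: inner_sum_left)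
  finally show ?thesis using assms unfolding mu_def[symmetric]
    by (simp add: power2_norm_eq_inner)
qed

lemma wjensen:
  fixes w :: "'a \<Rightarrow> 'v::real_inner"
  assumes "finite A" "(\<Sum>a\<in>A. c a) = 1" "\<And>a. a \<in> A \<Longrightarrow> c a \<ge> 0"
  shows "(norm (\<Sum>b\<in>A. c b *\<^sub>R w b))\<^sup>2 \<le> (\<Sum>a\<in>A. c a * (norm (w a))\<^sup>2)"
proof -
  have "0 \<le> (\<Sum>a\<in>A. c a * (norm (w a - (\<Sum>b\<in>A. c b *\<^sub>R w b)))\<^sup>2)"
    using assms(3) by (intro sum_nonneg) auto
  then show ?thesis using wvar[OF assms(1,2), of w] by linarith
qed

lemma sq_add_le: "(norm ((a::'v::real_normed_vector) + b))\<^sup>2 \<le> 2 * (norm a)\<^sup>2 + 2 * (norm b)\<^sup>2"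
proof -
  have "(norm (a + b))\<^sup>2 \<le> (norm a + norm b)\<^sup>2"
    by (simp add: norm_triangle_ineq power_mono)
  also have "\<dots> \<le> 2 * (norm a)\<^sup>2 + 2 * (norm b)\<^sup>2"
  proof -
    have "0 \<le> (norm a - norm b)\<^sup>2" by simp
    then show ?thesis by (simp add: power2_sum power2_diff)
  qed
  finally show ?thesis .
qed

lemma sq_diff_le: "(norm ((a::'v::real_normed_vector) - b))\<^sup>2 \<le> 2 * (norm a)\<^sup>2 + 2 * (norm b)\<^sup>2"
  using sq_add_le[of a "-b"] by simp

lemma decomp:
  fixes v :: "nat \<Rightarrow> 'v::real_inner"
  assumes "n \<ge> 1"
  shows "(\<Sum>i<n. (norm (v i - c))\<^sup>2) = cons_err n v + real n * (norm (avg n v - c))\<^sup>2"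
proof -
  have n: "real n > 0" using assms by simp
  have s1: "(\<Sum>i<n. 1 / real n) = 1" using n by simp
  have av: "(\<Sum>b<n. (1 / real n) *\<^sub>R (v b - c)) = avg n v - c"
    using n by (simp add: avg_def scaleR_sum_right[symmetric] sum_subtractf scaleR_diff_right sum_constant_scaleR)
  have "(\<Sum>a<n. 1 / real n * (norm ((v a - c) - (avg n v - c)))\<^sup>2)
     = (\<Sum>a<n. 1 / real n * (norm (v a - c))\<^sup>2) - (norm (avg n v - c))\<^sup>2"
    using wvar[of "{..<n}" "\<lambda>_. 1 / real n" "\<lambda>i. v i - c", OF _ s1] av by simp
  then have "(1 / real n) * cons_err n v = (1 / real n) * (\<Sum>i<n. (norm (v i - c))\<^sup>2) - (norm (avg n v - c))\<^sup>2"
    by (simp add: cons_err_def sum_distrib_left)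
  then show ?thesis using n by (simp add: field_simps)
qed

lemma cons_err_nonneg: "cons_err n v \<ge> 0"
  unfolding cons_err_def by (intro sum_nonneg) auto

lemma avg_diff: "avg n (\<lambda>i. a i - b i) = avg n a - avg n b"
  by (simp add: avg_def sum_subtractf scaleR_diff_right)
lemma avg_add: "avg n (\<lambda>i. a i + b i) = avg n a + avg n b"
  by (simp add: avg_def sum.distrib scaleR_add_right)
lemma avg_scale: "avg n (\<lambda>i. c *\<^sub>R a i) = c *\<^sub>R avg n a"
  by (simp add: avg_def scaleR_sum_right[symmetric])

lemma cons_err_diff: "cons_err n (\<lambda>i. a i - b i) \<le> 2 * cons_err n a + 2 * cons_err n b"
proof -
  have "cons_err n (\<lambda>i. a i - b i) = (\<Sum>i<n. (norm ((a i - avg n a) - (b i - avg n b)))\<^sup>2)"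
    unfolding cons_err_def avg_diff by (simp add: algebra_simps)
  also have "\<dots> \<le> (\<Sum>i<n. 2 * (norm (a i - avg n a))\<^sup>2 + 2 * (norm (b i - avg n b))\<^sup>2)"
    by (intro sum_mono sq_diff_le)
  finally show ?thesis by (simp add: cons_err_def sum.distrib sum_distrib_left)
qed

lemma cons_err_scale: "cons_err n (\<lambda>i. c *\<^sub>R a i) = c\<^sup>2 * cons_err n a"
  unfolding cons_err_def avg_scale
  by (simp add: scaleR_diff_right[symmetric] sum_distrib_left power_mult_distrib)

lemma avgW:
  assumes "doubly_stochastic n W"
  shows "avg n (\<lambda>i. \<Sum>r<n. W i r *\<^sub>R v r) = avg n v"
proof -
  have "(\<Sum>i<n. \<Sum>r<n. W i r *\<^sub>R v r) = (\<Sum>r<n. (\<Sum>i<n. W i r) *\<^sub>R v r)"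
    by (subst sum.swap) (simp add: scaleR_sum_left)
  also have "\<dots> = (\<Sum>r<n. v r)" using assms by (simp add: doubly_stochastic_def)
  finally show ?thesis by (simp add: avg_def)
qed

lemma consW:
  fixes v :: "nat \<Rightarrow> 'v::real_inner"
  assumes "doubly_stochastic n W" "nonneg_mat n W"
  shows "cons_err n (\<lambda>i. \<Sum>r<n. W i r *\<^sub>R v r) \<le> cons_err n v"
proof -
  have e: "(\<Sum>r<n. W i r *\<^sub>R v r) - avg n v = (\<Sum>r<n. W i r *\<^sub>R (v r - avg n v))" if "i < n" for i
  proof -
    have "(\<Sum>r<n. W i r *\<^sub>R (v r - avg n v)) = (\<Sum>r<n. W i r *\<^sub>R v r) - (\<Sum>r<n. W i r) *\<^sub>R avg n v"
      by (simp add: scaleR_diff_right sum_subtractf scaleR_sum_left)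
    then show ?thesis using assms that by (simp add: doubly_stochastic_def)
  qed
  have "cons_err n (\<lambda>i. \<Sum>r<n. W i r *\<^sub>R v r) = (\<Sum>i<n. (norm (\<Sum>r<n. W i r *\<^sub>R (v r - avg n v)))\<^sup>2)"
    unfolding cons_err_def avgW[OF assms(1)] using e by simp
  also have "\<dots> \<le> (\<Sum>i<n. \<Sum>r<n. W i r * (norm (v r - avg n v))\<^sup>2)"
    using assms by (intro sum_mono wjensen) (auto simp: doubly_stochastic_def nonneg_mat_def)
  also have "\<dots> = (\<Sum>r<n. (\<Sum>i<n. W i r) * (norm (v r - avg n v))\<^sup>2)"
    by (subst sum.swap) (simp add: sum_distrib_right)
  also have "\<dots> = cons_err n v" using assms by (simp add: doubly_stochastic_def cons_err_def)
  finally show ?thesis .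
qed

lemma sum_PiE_pair:
  fixes f :: "'b \<Rightarrow> 'b \<Rightarrow> real"
  assumes "finite I" "finite A" "i \<in> I" "l \<in> I" "i \<noteq> l"
  shows "(\<Sum>u\<in>PiE I (\<lambda>_. A). f (u i) (u l)) = real (card A ^ (card I - 2)) * (\<Sum>a\<in>A. \<Sum>b\<in>A. f a b)"
proof -
  have ind: "(\<Sum>u\<in>PiE I (\<lambda>_. A). (if u i = a then 1 else 0) * (if u l = b then (1::real) else 0))
        = real (card A ^ (card I - 2))" if ab: "a \<in> A" "b \<in> A" for a b
  proof -
    define g where "g = (\<lambda>x y. if x = i then (if y = a then 1 else 0) else if x = l then (if y = b then 1 else 0) else (1::real))"
    have "(\<Sum>u\<in>PiE I (\<lambda>_. A). (if u i = a then 1 else 0) * (if u l = b then (1::real) else 0))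
        = (\<Sum>u\<in>PiE I (\<lambda>_. A). \<Prod>x\<in>I. g x (u x))"
    proof (intro sum.cong refl)
      fix u
      have "(\<Prod>x\<in>I. g x (u x)) = g i (u i) * (\<Prod>x\<in>I-{i}. g x (u x))"
        using assms by (simp add: prod.remove)
      also have "(\<Prod>x\<in>I-{i}. g x (u x)) = g l (u l) * (\<Prod>x\<in>I-{i}-{l}. g x (u x))"
        using assms by (subst prod.remove[of _ l]) auto
      also have "(\<Prod>x\<in>I-{i}-{l}. g x (u x)) = 1" by (intro prod.neutral) (auto simp: g_def)
      finally show "(if u i = a then 1 else 0) * (if u l = b then (1::real) else 0) = (\<Prod>x\<in>I. g x (u x))"
        using assms by (simp add: g_def)
    qed
    also have "\<dots> = (\<Prod>x\<in>I. \<Sum>y\<in>A. g x y)"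
      by (rule prod_sum_PiE[symmetric]) (use assms in auto)
    also have "\<dots> = (\<Sum>y\<in>A. g i y) * ((\<Sum>y\<in>A. g l y) * (\<Prod>x\<in>I-{i}-{l}. \<Sum>y\<in>A. g x y))"
      using assms by (simp add: prod.remove[of I i] prod.remove[of "I-{i}" l])
    also have "(\<Prod>x\<in>I-{i}-{l}. \<Sum>y\<in>A. g x y) = (\<Prod>x\<in>I-{i}-{l}. real (card A))"
      by (intro prod.cong refl) (auto simp: g_def)
    also have "\<dots> = real (card A) ^ (card I - 2)"
      using assms by (simp add: card_Diff_singleton_if numeral_2_eq_2)
    also have "(\<Sum>y\<in>A. g i y) = 1" using assms ab by (simp add: g_def)
    also have "(\<Sum>y\<in>A. g l y) = 1" using assms ab by (simp add: g_def)
    finally show ?thesis by simp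
  qed
  have "(\<Sum>u\<in>PiE I (\<lambda>_. A). f (u i) (u l))
      = (\<Sum>u\<in>PiE I (\<lambda>_. A). \<Sum>a\<in>A. \<Sum>b\<in>A. f a b * ((if u i = a then 1 else 0) * (if u l = b then 1 else 0)))"
  proof (intro sum.cong refl)
    fix u assume u: "u \<in> PiE I (\<lambda>_. A)"
    then have "u i \<in> A" "u l \<in> A" using assms by auto
    have "(\<Sum>a\<in>A. \<Sum>b\<in>A. f a b * ((if u i = a then 1 else 0) * (if u l = b then 1 else 0)))
       = (\<Sum>a\<in>A. if a = u i then (\<Sum>b\<in>A. if b = u l then f a b else 0) else 0)"
      by (intro sum.cong refl) (auto intro!: sum.cong)
    then show "f (u i) (u l) = (\<Sum>a\<in>A. \<Sum>b\<in>A. f a b * ((if u i = a then 1 else 0) * (if u l = b then 1 else 0)))"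
      using \<open>u i \<in> A\<close> \<open>u l \<in> A\<close> assms by (simp add: sum.delta')
  qed
  also have "\<dots> = (\<Sum>a\<in>A. \<Sum>u\<in>PiE I (\<lambda>_. A). \<Sum>b\<in>A. f a b * ((if u i = a then 1 else 0) * (if u l = b then 1 else 0)))"
    by (rule sum.swap)
  also have "\<dots> = (\<Sum>a\<in>A. \<Sum>b\<in>A. \<Sum>u\<in>PiE I (\<lambda>_. A). f a b * ((if u i = a then 1 else 0) * (if u l = b then 1 else 0)))"
    by (intro sum.cong refl) (rule sum.swap)
  also have "\<dots> = (\<Sum>a\<in>A. \<Sum>b\<in>A. f a b * (\<Sum>u\<in>PiE I (\<lambda>_. A). (if u i = a then 1 else 0) * (if u l = b then 1 else 0)))"
    by (simp add: sum_distrib_left)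
  also have "\<dots> = (\<Sum>a\<in>A. \<Sum>b\<in>A. f a b * real (card A ^ (card I - 2)))"
    using ind by simp
  finally show ?thesis by (simp add: sum_distrib_right mult.commute)
qed

lemma sum_PiE_single:
  fixes f :: "'b \<Rightarrow> real"
  assumes "finite I" "finite A" "i \<in> I"
  shows "(\<Sum>u\<in>PiE I (\<lambda>_. A). f (u i)) = real (card A ^ (card I - 1)) * (\<Sum>a\<in>A. f a)"
proof -
  define g where "g = (\<lambda>x y. if x = i then f y else (1::real))"
  have "(\<Sum>u\<in>PiE I (\<lambda>_. A). f (u i)) = (\<Sum>u\<in>PiE I (\<lambda>_. A). \<Prod>x\<in>I. g x (u x))"
  proof (intro sum.cong refl)
    fix u
    have "(\<Prod>x\<in>I. g x (u x)) = g i (u i) * (\<Prod>x\<in>I-{i}. g x (u x))"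
      using assms by (simp add: prod.remove)
    also have "(\<Prod>x\<in>I-{i}. g x (u x)) = 1" by (intro prod.neutral) (auto simp: g_def)
    finally show "f (u i) = (\<Prod>x\<in>I. g x (u x))" by (simp add: g_def)
  qed
  also have "\<dots> = (\<Prod>x\<in>I. \<Sum>y\<in>A. g x y)"
    by (rule prod_sum_PiE[symmetric]) (use assms in auto)
  also have "\<dots> = (\<Sum>y\<in>A. g i y) * (\<Prod>x\<in>I-{i}. \<Sum>y\<in>A. g x y)"
    using assms by (simp add: prod.remove[of I i])
  also have "(\<Prod>x\<in>I-{i}. \<Sum>y\<in>A. g x y) = (\<Prod>x\<in>I-{i}. real (card A))"
    by (intro prod.cong refl) (auto simp: g_def)
  also have "\<dots> = real (card A) ^ (card I - 1)"
    using assms by simp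
  finally show ?thesis by (simp add: g_def mult.commute)
qed


definition gt_gp where "gt_gp grad W n m \<alpha> x0 T S k = fst (snd (snd (gts grad W n m \<alpha> x0 T S k)))"

lemma gts_parts: "gts grad W n m \<alpha> x0 T S k =
   (gt_x grad W n m \<alpha> x0 T S k, gt_y grad W n m \<alpha> x0 T S k, gt_gp grad W n m \<alpha> x0 T S k, gt_z grad W n m \<alpha> x0 T S k)"
  by (simp add: gt_x_def gt_y_def gt_gp_def gt_z_def)

lemma gt_Suc:
  "gt_y grad W n m \<alpha> x0 T S (Suc k) = (\<lambda>i. \<Sum>r<n. W i r *\<^sub>R (gt_y grad W n m \<alpha> x0 T S k r
        + gt_g grad W n m \<alpha> x0 T S k r - gt_gp grad W n m \<alpha> x0 T S k r))"
  "gt_x grad W n m \<alpha> x0 T S (Suc k) = (\<lambda>i. \<Sum>r<n. W i r *\<^sub>R (gt_x grad W n m \<alpha> x0 T S k r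
        - \<alpha> *\<^sub>R gt_y grad W n m \<alpha> x0 T S (Suc k) r))"
  "gt_gp grad W n m \<alpha> x0 T S (Suc k) = gt_g grad W n m \<alpha> x0 T S k"
  "gt_z grad W n m \<alpha> x0 T S (Suc k) = (\<lambda>i j. if j = S k i then gt_x grad W n m \<alpha> x0 T S k i
        else gt_z grad W n m \<alpha> x0 T S k i j)"
  unfolding gt_x_def gt_y_def gt_gp_def gt_z_def gt_g_def by (simp_all add: Let_def prod.case_eq_if)

lemma gt_0:
  "gt_y grad W n m \<alpha> x0 T S 0 = (\<lambda>i. 0)" "gt_gp grad W n m \<alpha> x0 T S 0 = (\<lambda>i. 0)"
  by (simp_all add: gt_y_def gt_gp_def)

lemma tracking:
  assumes "doubly_stochastic n W"
  shows "avg n (gt_y grad W n m \<alpha> x0 T S k) = avg n (gt_gp grad W n m \<alpha> x0 T S k)"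
proof (induction k)
  case 0 then show ?case by (simp add: gt_0)
next
  case (Suc k)
  show ?case
    by (simp only: gt_Suc avgW[OF assms] avg_diff avg_add Suc) simp
qed

lemma gts_agree:
  assumes "\<forall>t<K. \<forall>i<n. T t i = T' t i \<and> S t i = S' t i" "i < n"
  shows "gt_x grad W n m \<alpha> x0 T S K i = gt_x grad W n m \<alpha> x0 T' S' K i \<and>
         gt_y grad W n m \<alpha> x0 T S K i = gt_y grad W n m \<alpha> x0 T' S' K i \<and>
         gt_gp grad W n m \<alpha> x0 T S K i = gt_gp grad W n m \<alpha> x0 T' S' K i \<and>
         gt_z grad W n m \<alpha> x0 T S K i = gt_z grad W n m \<alpha> x0 T' S' K i"
  using assms
proof (induction K arbitrary: i)
  case 0 then show ?case by (simp add: gt_x_def gt_y_def gt_gp_def gt_z_def)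
next
  case (Suc K)
  have IH: "\<And>r. r < n \<Longrightarrow> gt_x grad W n m \<alpha> x0 T S K r = gt_x grad W n m \<alpha> x0 T' S' K r \<and>
         gt_y grad W n m \<alpha> x0 T S K r = gt_y grad W n m \<alpha> x0 T' S' K r \<and>
         gt_gp grad W n m \<alpha> x0 T S K r = gt_gp grad W n m \<alpha> x0 T' S' K r \<and>
         gt_z grad W n m \<alpha> x0 T S K r = gt_z grad W n m \<alpha> x0 T' S' K r"
    using Suc.IH Suc.prems by auto
  have TK: "\<And>r. r < n \<Longrightarrow> T K r = T' K r \<and> S K r = S' K r" using Suc.prems by auto
  have g: "\<And>r. r < n \<Longrightarrow> gt_g grad W n m \<alpha> x0 T S K r = gt_g grad W n m \<alpha> x0 T' S' K r"
    using IH TK by (simp add: gt_g_def gvec_def)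
  have y: "\<And>r. r < n \<Longrightarrow> gt_y grad W n m \<alpha> x0 T S (Suc K) r = gt_y grad W n m \<alpha> x0 T' S' (Suc K) r"
    unfolding gt_Suc using IH g by (intro sum.cong refl) auto
  show ?case
    unfolding gt_Suc using Suc.prems IH g y TK by (auto intro!: sum.cong ext)
qed


locale core =
  fixes grad :: "nat \<Rightarrow> nat \<Rightarrow> 'v::euclidean_space \<Rightarrow> 'v" and W :: "nat \<Rightarrow> nat \<Rightarrow> real"
    and n m :: nat and \<alpha> L :: real
  assumes n1: "n \<ge> 1" and m1: "m \<ge> 1" and Lpos: "L > 0"
    and lip: "\<And>i j x y. i < n \<Longrightarrow> j < m \<Longrightarrow> norm (grad i j x - grad i j y) \<le> L * norm (x - y)"
    and nonneg: "nonneg_mat n W" and ds: "doubly_stochastic n W" and apos: "\<alpha> > 0"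
    and astep: "\<alpha> \<le> sqrt (real n) / (sqrt (8 * real m) * L)"
begin

definition dev where
  "dev i xv zv j = grad i j xv - grad i j (zv j) + (1 / real m) *\<^sub>R (\<Sum>j'<m. grad i j' (zv j')) - grad_loc grad m i xv"

lemma devV:
  assumes "i < n"
  shows "(\<Sum>j<m. dev i xv zv j) = 0"
    "(\<Sum>j<m. (norm (dev i xv zv j))\<^sup>2) \<le> L\<^sup>2 * (\<Sum>j<m. (norm (xv - zv j))\<^sup>2)"
proof -
  have m: "real m > 0" using m1 by simp
  define a where "a j = grad i j xv - grad i j (zv j)" for j
  define mu where "mu = (\<Sum>j<m. (1 / real m) *\<^sub>R a j)"
  have mu2: "mu = (1 / real m) *\<^sub>R (\<Sum>j<m. grad i j xv) - (1 / real m) *\<^sub>R (\<Sum>j<m. grad i j (zv j))"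
    unfolding mu_def a_def by (simp add: scaleR_sum_right[symmetric] sum_subtractf scaleR_diff_right)
  have d: "dev i xv zv j = a j - mu" for j
    unfolding dev_def a_def mu2 grad_loc_def by (simp add: algebra_simps)
  show "(\<Sum>j<m. dev i xv zv j) = 0"
  proof -
    have "(\<Sum>j<m. dev i xv zv j) = (\<Sum>j<m. a j) - real m *\<^sub>R mu"
      by (simp add: d sum_subtractf sum_constant_scaleR)
    also have "real m *\<^sub>R mu = (\<Sum>j<m. a j)"
      unfolding mu_def scaleR_sum_right using m by simp
    finally show ?thesis by simp
  qed
  have s1: "(\<Sum>j<m. 1 / real m) = 1" using m by simp
  have "(\<Sum>j<m. 1 / real m * (norm (a j - mu))\<^sup>2) = (\<Sum>j<m. 1 / real m * (norm (a j))\<^sup>2) - (norm mu)\<^sup>2"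
    using wvar[of "{..<m}" "\<lambda>_. 1 / real m" a, OF _ s1] unfolding mu_def by simp
  then have "(\<Sum>j<m. 1 / real m * (norm (a j - mu))\<^sup>2) \<le> (\<Sum>j<m. 1 / real m * (norm (a j))\<^sup>2)"
    by simp
  then have "(\<Sum>j<m. (norm (a j - mu))\<^sup>2) \<le> (\<Sum>j<m. (norm (a j))\<^sup>2)"
    using m by (simp add: sum_divide_distrib[symmetric] divide_le_cancel)
  also have "\<dots> \<le> (\<Sum>j<m. L\<^sup>2 * (norm (xv - zv j))\<^sup>2)"
  proof (intro sum_mono)
    fix j assume "j \<in> {..<m}"
    then have "norm (a j) \<le> L * norm (xv - zv j)" using lip assms unfolding a_def by auto
    then have "(norm (a j))\<^sup>2 \<le> (L * norm (xv - zv j))\<^sup>2" by (intro power_mono) auto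
    then show "(norm (a j))\<^sup>2 \<le> L\<^sup>2 * (norm (xv - zv j))\<^sup>2" by (simp add: power_mult_distrib)
  qed
  finally show "(\<Sum>j<m. (norm (dev i xv zv j))\<^sup>2) \<le> L\<^sup>2 * (\<Sum>j<m. (norm (xv - zv j))\<^sup>2)"
    by (simp add: d sum_distrib_left)
qed

abbreviation "PP \<equiv> PiE {..<n} (\<lambda>_. {..<m})"

lemma cardPP: "card PP = m ^ n"
  by (simp add: card_PiE)

lemma sumPP_single:
  assumes "i < n"
  shows "(\<Sum>u\<in>PP. f (u i)) = real m ^ (n - 1) * (\<Sum>j<m. f j)"
  using sum_PiE_single[of "{..<n}" "{..<m}" i f] assms by simp

lemma sumPP_pair:
  assumes "i < n" "l < n" "i \<noteq> l"
  shows "(\<Sum>u\<in>PP. f (u i) (u l)) = real m ^ (n - 2) * (\<Sum>a<m. \<Sum>b<m. f a b)"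
  using sum_PiE_pair[of "{..<n}" "{..<m}" i l f] assms by simp

lemma avg_u3:
  "(\<Sum>u\<in>PP. \<Sum>i<n. (norm (gvec grad m Z X u i - grad_loc grad m i (X i)))\<^sup>2)
     \<le> real m ^ (n - 1) * L\<^sup>2 * (\<Sum>i<n. \<Sum>j<m. (norm (X i - Z i j))\<^sup>2)"
proof -
  have e: "gvec grad m Z X u i - grad_loc grad m i (X i) = dev i (X i) (Z i) (u i)" for u i
    by (simp add: gvec_def dev_def)
  have "(\<Sum>u\<in>PP. \<Sum>i<n. (norm (gvec grad m Z X u i - grad_loc grad m i (X i)))\<^sup>2)
      = (\<Sum>i<n. \<Sum>u\<in>PP. (norm (dev i (X i) (Z i) (u i)))\<^sup>2)"
    by (subst sum.swap) (simp add: e)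
  also have "\<dots> = (\<Sum>i<n. real m ^ (n - 1) * (\<Sum>j<m. (norm (dev i (X i) (Z i) j))\<^sup>2))"
    by (intro sum.cong refl sumPP_single) auto
  also have "\<dots> \<le> (\<Sum>i<n. real m ^ (n - 1) * (L\<^sup>2 * (\<Sum>j<m. (norm (X i - Z i j))\<^sup>2)))"
    by (intro sum_mono mult_left_mono devV(2)) auto
  finally show ?thesis by (simp add: sum_distrib_left mult.assoc)
qed

lemma sum_if_single:
  assumes "j < m"
  shows "(\<Sum>j'<m. (if j = j' then a else b)) = a + (real m - 1) * (b::real)"
proof -
  have "(\<Sum>j'<m. (if j = j' then a else b)) = (\<Sum>j'<m. b + (if j = j' then a - b else 0))"
    by (intro sum.cong) auto
  also have "\<dots> = real m * b + (a - b)" using assms by (simp add: sum.distrib)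
  finally show ?thesis by (simp add: algebra_simps)
qed

lemma avg_u2:
  "(\<Sum>u\<in>PP. \<Sum>i<n. \<Sum>j<m. (norm (X i - (if j = u i then x i else z i j)))\<^sup>2)
    = real m ^ (n - 1) * (\<Sum>i<n. real m * (norm (X i - x i))\<^sup>2 + (real m - 1) * (\<Sum>j<m. (norm (X i - z i j))\<^sup>2))"
proof -
  have "(\<Sum>u\<in>PP. \<Sum>i<n. \<Sum>j<m. (norm (X i - (if j = u i then x i else z i j)))\<^sup>2)
     = (\<Sum>i<n. \<Sum>u\<in>PP. \<Sum>j<m. (norm (X i - (if j = u i then x i else z i j)))\<^sup>2)"
    by (rule sum.swap)
  also have "\<dots> = (\<Sum>i<n. real m ^ (n - 1) * (\<Sum>j'<m. \<Sum>j<m. (norm (X i - (if j = j' then x i else z i j)))\<^sup>2))"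
    by (intro sum.cong refl sumPP_single[where f = "\<lambda>j'. \<Sum>j<m. (norm (X _ - (if j = j' then x _ else z _ j)))\<^sup>2"]) auto
  also have "\<dots> = (\<Sum>i<n. real m ^ (n - 1) * (real m * (norm (X i - x i))\<^sup>2 + (real m - 1) * (\<Sum>j<m. (norm (X i - z i j))\<^sup>2)))"
  proof (intro sum.cong refl arg_cong[where f = "\<lambda>t. real m ^ (n - 1) * t"])
    fix i
    have "(\<Sum>j'<m. \<Sum>j<m. (norm (X i - (if j = j' then x i else z i j)))\<^sup>2)
        = (\<Sum>j<m. \<Sum>j'<m. (if j = j' then (norm (X i - x i))\<^sup>2 else (norm (X i - z i j))\<^sup>2))"
      by (subst sum.swap) (intro sum.cong refl, auto)
    also have "\<dots> = (\<Sum>j<m. (norm (X i - x i))\<^sup>2 + (real m - 1) * (norm (X i - z i j))\<^sup>2)"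
      by (intro sum.cong refl sum_if_single) auto
    also have "\<dots> = real m * (norm (X i - x i))\<^sup>2 + (real m - 1) * (\<Sum>j<m. (norm (X i - z i j))\<^sup>2)"
      by (simp add: sum.distrib sum_distrib_left)
    finally show "(\<Sum>j'<m. \<Sum>j<m. (norm (X i - (if j = j' then x i else z i j)))\<^sup>2)
        = real m * (norm (X i - x i))\<^sup>2 + (real m - 1) * (\<Sum>j<m. (norm (X i - z i j))\<^sup>2)" .
  qed
  finally show ?thesis by (simp add: sum_distrib_left)
qed

lemma avg_u1_dev:
  fixes d :: "nat \<Rightarrow> nat \<Rightarrow> 'v"
  assumes "\<And>i. i < n \<Longrightarrow> (\<Sum>j<m. d i j) = 0"
  shows "(\<Sum>u\<in>PP. (norm (\<Sum>i<n. d i (u i)))\<^sup>2) = real m ^ (n - 1) * (\<Sum>i<n. \<Sum>j<m. (norm (d i j))\<^sup>2)"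
proof -
  have "(\<Sum>u\<in>PP. (norm (\<Sum>i<n. d i (u i)))\<^sup>2) = (\<Sum>u\<in>PP. \<Sum>i<n. \<Sum>l<n. d i (u i) \<bullet> d l (u l))"
  proof (intro sum.cong refl)
    fix u
    have "(norm (\<Sum>i<n. d i (u i)))\<^sup>2 = (\<Sum>i<n. d i (u i)) \<bullet> (\<Sum>l<n. d l (u l))"
      by (simp add: power2_norm_eq_inner)
    also have "\<dots> = (\<Sum>i<n. \<Sum>l<n. d i (u i) \<bullet> d l (u l))"
      by (simp only: inner_sum_left inner_sum_right) (rule sum.swap)
    finally show "(norm (\<Sum>i<n. d i (u i)))\<^sup>2 = (\<Sum>i<n. \<Sum>l<n. d i (u i) \<bullet> d l (u l))" .
  qed
  also have "\<dots> = (\<Sum>i<n. \<Sum>l<n. \<Sum>u\<in>PP. d i (u i) \<bullet> d l (u l))"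
    by (subst sum.swap) (intro sum.cong refl, rule sum.swap)
  also have "\<dots> = (\<Sum>i<n. \<Sum>l<n. if i = l then real m ^ (n - 1) * (\<Sum>j<m. (norm (d i j))\<^sup>2) else 0)"
  proof (intro sum.cong refl)
    fix i l assume il: "i \<in> {..<n}" "l \<in> {..<n}"
    show "(\<Sum>u\<in>PP. d i (u i) \<bullet> d l (u l)) = (if i = l then real m ^ (n - 1) * (\<Sum>j<m. (norm (d i j))\<^sup>2) else 0)"
    proof (cases "i = l")
      case True
      then show ?thesis using il sumPP_single[of i "\<lambda>a. d i a \<bullet> d i a"]
        by (simp add: power2_norm_eq_inner)
    next
      case False
      have "(\<Sum>u\<in>PP. d i (u i) \<bullet> d l (u l)) = real m ^ (n - 2) * (\<Sum>a<m. \<Sum>b<m. d i a \<bullet> d l b)"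
        using il False by (intro sumPP_pair) auto
      also have "(\<Sum>a<m. \<Sum>b<m. d i a \<bullet> d l b) = (\<Sum>a<m. d i a) \<bullet> (\<Sum>b<m. d l b)"
        by (simp only: inner_sum_left inner_sum_right) (rule sum.swap)
      also have "\<dots> = 0" using assms il by simp
      finally show ?thesis using False by simp
    qed
  qed
  also have "\<dots> = real m ^ (n - 1) * (\<Sum>i<n. \<Sum>j<m. (norm (d i j))\<^sup>2)"
    by (simp add: sum_distrib_left)
  finally show ?thesis .
qed

lemma P1_bound:
  fixes X x :: "nat \<Rightarrow> 'v"
  shows "(\<Sum>i<n. (norm (X i - x i))\<^sup>2) \<le> 2 * cons_err n X + 2 * cons_err n x + real n * (norm (avg n X - avg n x))\<^sup>2"
proof -
  have "(\<Sum>i<n. (norm (X i - x i))\<^sup>2) = (\<Sum>i<n. (norm ((\<lambda>i. X i - x i) i - 0))\<^sup>2)" by simp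
  also have "\<dots> = cons_err n (\<lambda>i. X i - x i) + real n * (norm (avg n (\<lambda>i. X i - x i) - 0))\<^sup>2"
    using decomp[OF n1, of "\<lambda>i. X i - x i" 0] by simp
  also have "\<dots> \<le> 2 * cons_err n X + 2 * cons_err n x + real n * (norm (avg n X - avg n x))\<^sup>2"
    using cons_err_diff[of n X x] by (simp add: avg_diff)
  finally show ?thesis .
qed

lemma P2_bound:
  fixes X x :: "nat \<Rightarrow> 'v"
  shows "(\<Sum>i<n. (1 / real m) * (\<Sum>j<m. (norm (X i - z i j))\<^sup>2))
     \<le> 2 * cons_err n X + 2 * real n * (norm (avg n X - avg n x))\<^sup>2 + 2 * real n * t_gap n m x z"
proof -
  have "(\<Sum>i<n. (1 / real m) * (\<Sum>j<m. (norm (X i - z i j))\<^sup>2))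
     \<le> (\<Sum>i<n. (1 / real m) * (\<Sum>j<m. 2 * (norm (X i - avg n x))\<^sup>2 + 2 * (norm (avg n x - z i j))\<^sup>2))"
  proof (intro sum_mono mult_left_mono)
    fix i j
    show "(norm (X i - z i j))\<^sup>2 \<le> 2 * (norm (X i - avg n x))\<^sup>2 + 2 * (norm (avg n x - z i j))\<^sup>2"
      using sq_add_le[of "X i - avg n x" "avg n x - z i j"] by simp
  qed auto
  also have "\<dots> = 2 * (\<Sum>i<n. (norm (X i - avg n x))\<^sup>2) + 2 * (\<Sum>i<n. (1 / real m) * (\<Sum>j<m. (norm (avg n x - z i j))\<^sup>2))"
  proof -
    have "(1 / real m) * (\<Sum>j<m. 2 * (norm (X i - avg n x))\<^sup>2 + 2 * (norm (avg n x - z i j))\<^sup>2)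
        = 2 * (norm (X i - avg n x))\<^sup>2 + 2 * ((1 / real m) * (\<Sum>j<m. (norm (avg n x - z i j))\<^sup>2))" for i
      using m1 by (simp add: sum.distrib sum_distrib_left[symmetric] field_simps)
    then show ?thesis by (simp add: sum.distrib sum_distrib_left)
  qed
  also have "(\<Sum>i<n. (norm (X i - avg n x))\<^sup>2) = cons_err n X + real n * (norm (avg n X - avg n x))\<^sup>2"
    by (rule decomp[OF n1])
  also have "(\<Sum>i<n. (1 / real m) * (\<Sum>j<m. (norm (avg n x - z i j))\<^sup>2)) = real n * t_gap n m x z"
    using n1 by (simp add: t_gap_def)
  finally show ?thesis by (simp add: algebra_simps)
qed

end


context core begin

lemma aL: "\<alpha>\<^sup>2 * L\<^sup>2 \<le> real n / 8"
proof -
  have m: "real m \<ge> 1" using m1 by simp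
  have "\<alpha> * L \<le> sqrt (real n) / (sqrt (8 * real m) * L) * L"
    using astep Lpos by (intro mult_right_mono) auto
  also have "\<dots> = sqrt (real n) / sqrt (8 * real m)" using Lpos by simp
  finally have "(\<alpha> * L)\<^sup>2 \<le> (sqrt (real n) / sqrt (8 * real m))\<^sup>2"
    using apos Lpos by (intro power_mono) auto
  also have "\<dots> = real n / (8 * real m)" using m by (simp add: power_divide)
  also have "\<dots> \<le> real n / 8" using m by (intro divide_left_mono) auto
  finally show ?thesis by (simp add: power_mult_distrib)
qed

lemma stepA:
  fixes X x :: "nat \<Rightarrow> 'v" and z :: "nat \<Rightarrow> nat \<Rightarrow> 'v"
  shows "(\<Sum>u2\<in>PP. \<Sum>u3\<in>PP. \<Sum>i<n. (norm (gvec grad m (\<lambda>i j. if j = u2 i then x i else z i j) X u3 i - grad_loc grad m i (X i)))\<^sup>2)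
    \<le> real m ^ (2 * n) * L\<^sup>2 * (2 * cons_err n X + 2 * cons_err n x + 2 * real n * (norm (avg n X - avg n x))\<^sup>2 + 2 * real n * t_gap n m x z)"
proof -
  obtain n' where nn: "n = Suc n'" using n1 by (cases n) auto
  define M where "M = real m"
  have M1: "M \<ge> 1" using m1 by (simp add: M_def)
  define B where "B = 2 * cons_err n X + 2 * cons_err n x + 2 * real n * (norm (avg n X - avg n x))\<^sup>2 + 2 * real n * t_gap n m x z"
  define P1 where "P1 = (\<Sum>i<n. (norm (X i - x i))\<^sup>2)"
  define Q where "Q = (\<Sum>i<n. \<Sum>j<m. (norm (X i - z i j))\<^sup>2)"
  have tg: "t_gap n m x z \<ge> 0" unfolding t_gap_def using n1 by (intro mult_nonneg_nonneg sum_nonneg) auto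
  have nD: "real n * (norm (avg n X - avg n x))\<^sup>2 \<ge> 0" by simp
  have nt: "real n * t_gap n m x z \<ge> 0" using tg by simp
  have P1B: "P1 \<le> B" using P1_bound[of X x] cons_err_nonneg[of n X] nD nt unfolding P1_def B_def by linarith
  have Qeq: "Q = M * (\<Sum>i<n. (1 / real m) * (\<Sum>j<m. (norm (X i - z i j))\<^sup>2))"
    using m1 unfolding Q_def M_def by (simp add: sum_distrib_left)
  have QB: "Q \<le> M * B"
    unfolding Qeq using P2_bound[of X z x] cons_err_nonneg[of n x] M1 unfolding B_def
    by (intro mult_left_mono) auto
  have "(\<Sum>u2\<in>PP. \<Sum>u3\<in>PP. \<Sum>i<n. (norm (gvec grad m (\<lambda>i j. if j = u2 i then x i else z i j) X u3 i - grad_loc grad m i (X i)))\<^sup>2)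
     \<le> (\<Sum>u2\<in>PP. M ^ (n - 1) * L\<^sup>2 * (\<Sum>i<n. \<Sum>j<m. (norm (X i - (if j = u2 i then x i else z i j)))\<^sup>2))"
    unfolding M_def by (intro sum_mono avg_u3)
  also have "\<dots> = M ^ (n - 1) * L\<^sup>2 * (M ^ (n - 1) * (\<Sum>i<n. M * (norm (X i - x i))\<^sup>2 + (M - 1) * (\<Sum>j<m. (norm (X i - z i j))\<^sup>2)))"
    unfolding M_def by (simp add: sum_distrib_left[symmetric] avg_u2)
  also have "\<dots> = M ^ (n - 1) * L\<^sup>2 * (M ^ (n - 1) * (M * P1 + (M - 1) * Q))"
    unfolding P1_def Q_def by (simp add: sum.distrib sum_distrib_left)
  also have "\<dots> \<le> M ^ (n - 1) * L\<^sup>2 * (M ^ (n - 1) * (M * B + (M - 1) * (M * B)))"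
    using P1B QB M1 by (intro mult_left_mono add_mono) auto
  also have "\<dots> = M ^ (2 * n) * L\<^sup>2 * B"
    by (simp add: nn algebra_simps power_add power2_eq_square power_mult)
  finally show ?thesis unfolding M_def B_def .
qed

lemma sum_lin: "(\<Sum>u\<in>A. K * (a + b * Y u + c * E u)) = K * (real (card A) * a + b * (\<Sum>u\<in>A. Y u) + c * (\<Sum>u\<in>A. E u))"
  for K a b c :: real
  by (simp add: sum.distrib sum_distrib_left[symmetric] distrib_left)

lemma core_ineq:
  fixes x y gp :: "nat \<Rightarrow> 'v" and z :: "nat \<Rightarrow> nat \<Rightarrow> 'v"
  assumes track: "avg n y = avg n gp"
  shows "(\<Sum>u1\<in>PP. \<Sum>u2\<in>PP. \<Sum>u3\<in>PP. \<Sum>i<n. (norm (gvec grad m (\<lambda>i j. if j = u2 i then x i else z i j)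
             (\<lambda>i. \<Sum>r<n. W i r *\<^sub>R (x r - \<alpha> *\<^sub>R (\<Sum>r'<n. W r r' *\<^sub>R (y r' + gvec grad m z x u1 r' - gp r')))) u3 i
           - grad_loc grad m i ((\<lambda>i. \<Sum>r<n. W i r *\<^sub>R (x r - \<alpha> *\<^sub>R (\<Sum>r'<n. W r r' *\<^sub>R (y r' + gvec grad m z x u1 r' - gp r')))) i)))\<^sup>2)
   \<le> real m ^ (3 * n) * (8.5 * L\<^sup>2 * cons_err n x + 4 * real n * L\<^sup>2 * t_gap n m x z
        + 6 * real n * \<alpha>\<^sup>2 * L\<^sup>2 * (norm (avg n (\<lambda>i. grad_loc grad m i (x i))))\<^sup>2)
     + 4 * \<alpha>\<^sup>2 * L\<^sup>2 * (real m ^ (2 * n) * (\<Sum>u1\<in>PP. cons_err n (\<lambda>i. \<Sum>r'<n. W i r' *\<^sub>R (y r' + gvec grad m z x u1 r' - gp r'))))"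
  (is "?L \<le> ?R")
proof -
  define M where "M = real m"
  have M1: "M \<ge> 1" using m1 by (simp add: M_def)
  define g where "g u = gvec grad m z x u" for u
  define y' where "y' u = (\<lambda>i. \<Sum>r'<n. W i r' *\<^sub>R (y r' + g u r' - gp r'))" for u
  define x' where "x' u = (\<lambda>i. \<Sum>r<n. W i r *\<^sub>R (x r - \<alpha> *\<^sub>R y' u r))" for u
  define C where "C = cons_err n x"
  define t where "t = t_gap n m x z"
  define G where "G = (norm (avg n (\<lambda>i. grad_loc grad m i (x i))))\<^sup>2"
  define Y where "Y u = cons_err n (y' u)" for u
  define E where "E u = (norm (avg n (g u) - avg n (\<lambda>i. grad_loc grad m i (x i))))\<^sup>2" for u
  have tg: "t \<ge> 0" unfolding t_def t_gap_def using n1 by (intro mult_nonneg_nonneg sum_nonneg) auto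
  have C0: "C \<ge> 0" unfolding C_def by (rule cons_err_nonneg)
  have Y0: "Y u \<ge> 0" for u unfolding Y_def by (rule cons_err_nonneg)
  have G0: "G \<ge> 0" unfolding G_def by simp
  have n0: "real n \<ge> 1" using n1 by simp
  have Cx': "cons_err n (x' u) \<le> 2 * C + 2 * \<alpha>\<^sup>2 * Y u" for u
  proof -
    have "cons_err n (x' u) \<le> cons_err n (\<lambda>r. x r - \<alpha> *\<^sub>R y' u r)"
      unfolding x'_def by (rule consW[OF ds nonneg])
    also have "\<dots> \<le> 2 * C + 2 * cons_err n (\<lambda>r. \<alpha> *\<^sub>R y' u r)"
      unfolding C_def by (rule cons_err_diff)
    also have "cons_err n (\<lambda>r. \<alpha> *\<^sub>R y' u r) = \<alpha>\<^sup>2 * Y u"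
      unfolding Y_def by (rule cons_err_scale)
    finally show ?thesis by simp
  qed
  have Dx': "(norm (avg n (x' u) - avg n x))\<^sup>2 = \<alpha>\<^sup>2 * (norm (avg n (g u)))\<^sup>2" for u
  proof -
    have "avg n (y' u) = avg n (g u)"
      unfolding y'_def avgW[OF ds] avg_diff avg_add track by simp
    then have "avg n (x' u) = avg n x - \<alpha> *\<^sub>R avg n (g u)"
      unfolding x'_def avgW[OF ds] avg_diff avg_scale by simp
    then show ?thesis by (simp add: power_mult_distrib)
  qed
  have gE: "(norm (avg n (g u)))\<^sup>2 \<le> 2 * G + 2 * E u" for u
    using sq_add_le[of "avg n (\<lambda>i. grad_loc grad m i (x i))" "avg n (g u) - avg n (\<lambda>i. grad_loc grad m i (x i))"]
    unfolding G_def E_def by simp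
  have per: "(\<Sum>u2\<in>PP. \<Sum>u3\<in>PP. \<Sum>i<n. (norm (gvec grad m (\<lambda>i j. if j = u2 i then x i else z i j) (x' u) u3 i - grad_loc grad m i (x' u i)))\<^sup>2)
     \<le> M ^ (2 * n) * L\<^sup>2 * (6 * C + 2 * real n * t + 4 * real n * \<alpha>\<^sup>2 * G + 4 * \<alpha>\<^sup>2 * Y u + 4 * real n * \<alpha>\<^sup>2 * E u)" for u
  proof -
    have "2 * cons_err n (x' u) + 2 * cons_err n x + 2 * real n * (norm (avg n (x' u) - avg n x))\<^sup>2 + 2 * real n * t_gap n m x z
       \<le> 2 * (2 * C + 2 * \<alpha>\<^sup>2 * Y u) + 2 * C + 2 * real n * (\<alpha>\<^sup>2 * (2 * G + 2 * E u)) + 2 * real n * t"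
      unfolding Dx' C_def[symmetric] t_def[symmetric]
      using Cx'[of u] gE[of u] n0 by (intro add_mono mult_left_mono) auto
    also have "\<dots> = 6 * C + 2 * real n * t + 4 * real n * \<alpha>\<^sup>2 * G + 4 * \<alpha>\<^sup>2 * Y u + 4 * real n * \<alpha>\<^sup>2 * E u"
      by (simp add: algebra_simps)
    finally have "2 * cons_err n (x' u) + 2 * cons_err n x + 2 * real n * (norm (avg n (x' u) - avg n x))\<^sup>2 + 2 * real n * t_gap n m x z
       \<le> 6 * C + 2 * real n * t + 4 * real n * \<alpha>\<^sup>2 * G + 4 * \<alpha>\<^sup>2 * Y u + 4 * real n * \<alpha>\<^sup>2 * E u" .
    then show ?thesis unfolding M_def
      by (intro order_trans[OF stepA[of x z "x' u"]] mult_left_mono) auto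
  qed
  have sumE: "(\<Sum>u\<in>PP. E u) \<le> M ^ n * L\<^sup>2 * (2 * C + 2 * real n * t) / (real n)\<^sup>2"
  proof -
    define d where "d i j = dev i (x i) (z i) j" for i j
    have eg: "avg n (g u) - avg n (\<lambda>i. grad_loc grad m i (x i)) = (1 / real n) *\<^sub>R (\<Sum>i<n. d i (u i))" for u
      unfolding avg_diff[symmetric] unfolding avg_def d_def g_def dev_def gvec_def by simp
    have "(\<Sum>u\<in>PP. E u) = (1 / real n)\<^sup>2 * (\<Sum>u\<in>PP. (norm (\<Sum>i<n. d i (u i)))\<^sup>2)"
      unfolding E_def eg by (simp add: sum_distrib_left power_divide)
    also have "(\<Sum>u\<in>PP. (norm (\<Sum>i<n. d i (u i)))\<^sup>2) = M ^ (n - 1) * (\<Sum>i<n. \<Sum>j<m. (norm (d i j))\<^sup>2)"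
      unfolding M_def d_def by (rule avg_u1_dev) (rule devV(1))
    also have "(\<Sum>i<n. \<Sum>j<m. (norm (d i j))\<^sup>2) \<le> (\<Sum>i<n. L\<^sup>2 * (\<Sum>j<m. (norm (x i - z i j))\<^sup>2))"
      unfolding d_def by (intro sum_mono devV(2)) auto
    also have "\<dots> = L\<^sup>2 * M * (\<Sum>i<n. (1 / real m) * (\<Sum>j<m. (norm (x i - z i j))\<^sup>2))"
      using m1 by (simp add: sum_distrib_left M_def)
    also have "\<dots> \<le> L\<^sup>2 * M * (2 * C + 2 * real n * t)"
      using P2_bound[of x z x] M1 unfolding C_def t_def by (intro mult_left_mono) auto
    finally have "(\<Sum>u\<in>PP. E u) \<le> (1 / real n)\<^sup>2 * (M ^ (n - 1) * (L\<^sup>2 * M * (2 * C + 2 * real n * t)))"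
      using M1 by (simp add: mult_left_mono)
    also have "\<dots> = M ^ n * L\<^sup>2 * (2 * C + 2 * real n * t) / (real n)\<^sup>2"
    proof -
      obtain n' where nn: "n = Suc n'" using n1 by (cases n) auto
      show ?thesis by (simp add: nn field_simps power2_eq_square)
    qed
    finally show ?thesis .
  qed
  have Lsum: "?L = (\<Sum>u\<in>PP. \<Sum>u2\<in>PP. \<Sum>u3\<in>PP. \<Sum>i<n. (norm (gvec grad m (\<lambda>i j. if j = u2 i then x i else z i j) (x' u) u3 i - grad_loc grad m i (x' u i)))\<^sup>2)"
    unfolding x'_def y'_def g_def by simp
  have "?L \<le> (\<Sum>u\<in>PP. M ^ (2 * n) * L\<^sup>2 * (6 * C + 2 * real n * t + 4 * real n * \<alpha>\<^sup>2 * G + 4 * \<alpha>\<^sup>2 * Y u + 4 * real n * \<alpha>\<^sup>2 * E u))"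
    unfolding Lsum by (intro sum_mono per)
  also have "\<dots> = M ^ (2 * n) * L\<^sup>2 * (M ^ n * (6 * C + 2 * real n * t + 4 * real n * \<alpha>\<^sup>2 * G) + 4 * \<alpha>\<^sup>2 * (\<Sum>u\<in>PP. Y u) + 4 * real n * \<alpha>\<^sup>2 * (\<Sum>u\<in>PP. E u))"
    by (simp only: sum_lin cardPP M_def of_nat_power)
  also have "\<dots> \<le> M ^ (2 * n) * L\<^sup>2 * (M ^ n * (6 * C + 2 * real n * t + 4 * real n * \<alpha>\<^sup>2 * G) + 4 * \<alpha>\<^sup>2 * (\<Sum>u\<in>PP. Y u) + 4 * real n * \<alpha>\<^sup>2 * (M ^ n * L\<^sup>2 * (2 * C + 2 * real n * t) / (real n)\<^sup>2))"
    using sumE apos n0 Lpos M1 by (intro mult_left_mono add_mono) auto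
  also have "\<dots> \<le> ?R"
  proof -
    have key: "4 * real n * \<alpha>\<^sup>2 * (M ^ n * L\<^sup>2 * (2 * C + 2 * real n * t) / (real n)\<^sup>2)
        = M ^ n * (\<alpha>\<^sup>2 * L\<^sup>2) * (8 * C + 8 * real n * t) / real n"
      using n0 by (simp add: field_simps power2_eq_square)
    have "M ^ n * (\<alpha>\<^sup>2 * L\<^sup>2) * (8 * C + 8 * real n * t) / real n \<le> M ^ n * (real n / 8) * (8 * C + 8 * real n * t) / real n"
      using aL C0 tg n0 M1 by (intro divide_right_mono mult_right_mono mult_left_mono) auto
    also have "\<dots> = M ^ n * (C + real n * t)" using n0 by (simp add: field_simps)
    finally have k2: "4 * real n * \<alpha>\<^sup>2 * (M ^ n * L\<^sup>2 * (2 * C + 2 * real n * t) / (real n)\<^sup>2) \<le> M ^ n * (C + real n * t)"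
      using key by simp
    have Mp: "M ^ n \<ge> 0" using M1 by simp
    have a2: "\<alpha>\<^sup>2 * G \<ge> 0" using G0 by simp
    have "M ^ (2 * n) * L\<^sup>2 * (M ^ n * (6 * C + 2 * real n * t + 4 * real n * \<alpha>\<^sup>2 * G) + 4 * \<alpha>\<^sup>2 * (\<Sum>u\<in>PP. Y u) + 4 * real n * \<alpha>\<^sup>2 * (M ^ n * L\<^sup>2 * (2 * C + 2 * real n * t) / (real n)\<^sup>2))
       \<le> M ^ (2 * n) * L\<^sup>2 * (M ^ n * (6 * C + 2 * real n * t + 4 * real n * \<alpha>\<^sup>2 * G) + 4 * \<alpha>\<^sup>2 * (\<Sum>u\<in>PP. Y u) + M ^ n * (C + real n * t))"
      using k2 M1 by (intro mult_left_mono add_mono) auto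
    also have "\<dots> = M ^ (3 * n) * (L\<^sup>2 * (7 * C + 3 * real n * t + 4 * real n * \<alpha>\<^sup>2 * G)) + 4 * \<alpha>\<^sup>2 * L\<^sup>2 * (M ^ (2 * n) * (\<Sum>u\<in>PP. Y u))"
    proof -
      have "M ^ (3 * n) = M ^ (2 * n) * M ^ n" by (simp add: power_add[symmetric])
      then show ?thesis by (simp add: algebra_simps)
    qed
    also have "\<dots> \<le> ?R"
    proof -
      have "L\<^sup>2 * (7 * C + 3 * real n * t + 4 * real n * \<alpha>\<^sup>2 * G) \<le> 8.5 * L\<^sup>2 * C + 4 * real n * L\<^sup>2 * t + 6 * real n * \<alpha>\<^sup>2 * L\<^sup>2 * G"
      proof -
        have "L\<^sup>2 * C \<ge> 0" "L\<^sup>2 * (real n * t) \<ge> 0" "L\<^sup>2 * (real n * (\<alpha>\<^sup>2 * G)) \<ge> 0"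
          using C0 tg n0 a2 by auto
        then show ?thesis by (simp add: algebra_simps)
      qed
      then show ?thesis unfolding M_def C_def t_def G_def Y_def y'_def g_def
        using M1 unfolding M_def by (intro add_mono mult_left_mono) auto
    qed
    finally show ?thesis .
  qed
  finally show ?thesis .
qed

end

lemma gts_prefix:
  assumes "\<forall>t<K. T t = T' t \<and> S t = S' t"
  shows "gts grad W n m \<alpha> x0 T S K = gts grad W n m \<alpha> x0 T' S' K"
  using assms by (induction K) (auto simp: Let_def split: prod.split)

lemma gt_prefix:
  assumes "\<forall>t<K. T t = T' t \<and> S t = S' t"
  shows "gt_x grad W n m \<alpha> x0 T S K = gt_x grad W n m \<alpha> x0 T' S' K"
    "gt_y grad W n m \<alpha> x0 T S K = gt_y grad W n m \<alpha> x0 T' S' K"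
    "gt_gp grad W n m \<alpha> x0 T S K = gt_gp grad W n m \<alpha> x0 T' S' K"
    "gt_z grad W n m \<alpha> x0 T S K = gt_z grad W n m \<alpha> x0 T' S' K"
  using gts_prefix[OF assms, of grad W n m \<alpha> x0]
  by (simp_all add: gt_x_def gt_y_def gt_gp_def gt_z_def)

definition LHSq where
  "LHSq grad W n m \<alpha> x0 k T S = (\<Sum>i<n. (norm (gt_g grad W n m \<alpha> x0 T S (Suc k) i
      - grad_loc grad m i (gt_x grad W n m \<alpha> x0 T S (Suc k) i)))\<^sup>2)"

definition Yq where
  "Yq grad W n m \<alpha> x0 k T S = cons_err n (gt_y grad W n m \<alpha> x0 T S (Suc k))"

definition Rq where
  "Rq grad W n m \<alpha> L x0 k T S = 8.5 * L\<^sup>2 * cons_err n (gt_x grad W n m \<alpha> x0 T S k)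
       + 4 * real n * L\<^sup>2 * t_gap n m (gt_x grad W n m \<alpha> x0 T S k) (gt_z grad W n m \<alpha> x0 T S k)
       + 6 * real n * \<alpha>\<^sup>2 * L\<^sup>2 * (norm (avg n (\<lambda>i. grad_loc grad m i (gt_x grad W n m \<alpha> x0 T S k i))))\<^sup>2"

lemma LHSq_cong:
  assumes a: "\<forall>t<Suc k. \<forall>i<n. T t i = T' t i \<and> S t i = S' t i"
    and b: "\<forall>i<n. T (Suc k) i = T' (Suc k) i"
  shows "LHSq grad W n m \<alpha> x0 k T S = LHSq grad W n m \<alpha> x0 k T' S'"
proof -
  have "gt_g grad W n m \<alpha> x0 T S (Suc k) i = gt_g grad W n m \<alpha> x0 T' S' (Suc k) i
     \<and> gt_x grad W n m \<alpha> x0 T S (Suc k) i = gt_x grad W n m \<alpha> x0 T' S' (Suc k) i" if "i < n" for i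
    using gts_agree[OF a that, of grad W m \<alpha> x0] b that by (simp add: gt_g_def gvec_def)
  then show ?thesis unfolding LHSq_def by (intro sum.cong) auto
qed

lemma Yq_cong:
  assumes a: "\<forall>t<k. \<forall>i<n. T t i = T' t i \<and> S t i = S' t i"
    and b: "\<forall>i<n. T k i = T' k i"
  shows "Yq grad W n m \<alpha> x0 k T S = Yq grad W n m \<alpha> x0 k T' S'"
proof -
  have st: "\<And>r. r < n \<Longrightarrow> gt_x grad W n m \<alpha> x0 T S k r = gt_x grad W n m \<alpha> x0 T' S' k r \<and>
         gt_y grad W n m \<alpha> x0 T S k r = gt_y grad W n m \<alpha> x0 T' S' k r \<and>
         gt_gp grad W n m \<alpha> x0 T S k r = gt_gp grad W n m \<alpha> x0 T' S' k r \<and>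
         gt_z grad W n m \<alpha> x0 T S k r = gt_z grad W n m \<alpha> x0 T' S' k r"
    using gts_agree[OF a] by blast
  have g: "\<And>r. r < n \<Longrightarrow> gt_g grad W n m \<alpha> x0 T S k r = gt_g grad W n m \<alpha> x0 T' S' k r"
    using st b by (simp add: gt_g_def gvec_def)
  have y: "\<forall>i<n. gt_y grad W n m \<alpha> x0 T S (Suc k) i = gt_y grad W n m \<alpha> x0 T' S' (Suc k) i"
    unfolding gt_Suc using st g by (auto intro!: sum.cong)
  then have "avg n (gt_y grad W n m \<alpha> x0 T S (Suc k)) = avg n (gt_y grad W n m \<alpha> x0 T' S' (Suc k))"
    unfolding avg_def by (intro arg_cong[where f = "\<lambda>v. _ *\<^sub>R v"] sum.cong) auto
  then show ?thesis unfolding Yq_def cons_err_def using y by (intro sum.cong) auto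
qed

context core begin

lemma core_TS:
  "(\<Sum>u1\<in>PP. \<Sum>u2\<in>PP. \<Sum>u3\<in>PP. LHSq grad W n m \<alpha> x0 k (T(k := u1, Suc k := u3)) (S(k := u2)))
    \<le> real m ^ (3 * n) * Rq grad W n m \<alpha> L x0 k T S
      + 4 * \<alpha>\<^sup>2 * L\<^sup>2 * (real m ^ (2 * n) * (\<Sum>u1\<in>PP. Yq grad W n m \<alpha> x0 k (T(k := u1)) S))"
proof -
  define x where "x = gt_x grad W n m \<alpha> x0 T S k"
  define y where "y = gt_y grad W n m \<alpha> x0 T S k"
  define gp where "gp = gt_gp grad W n m \<alpha> x0 T S k"
  define z where "z = gt_z grad W n m \<alpha> x0 T S k"
  have pre1: "gt_x grad W n m \<alpha> x0 (T(k := u1, Suc k := u3)) (S(k := u2)) k = x"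
     "gt_y grad W n m \<alpha> x0 (T(k := u1, Suc k := u3)) (S(k := u2)) k = y"
     "gt_gp grad W n m \<alpha> x0 (T(k := u1, Suc k := u3)) (S(k := u2)) k = gp"
     "gt_z grad W n m \<alpha> x0 (T(k := u1, Suc k := u3)) (S(k := u2)) k = z" for u1 u2 u3
    unfolding x_def y_def gp_def z_def by (rule gt_prefix; simp)+
  have pre2: "gt_x grad W n m \<alpha> x0 (T(k := u1)) S k = x"
     "gt_y grad W n m \<alpha> x0 (T(k := u1)) S k = y"
     "gt_gp grad W n m \<alpha> x0 (T(k := u1)) S k = gp"
     "gt_z grad W n m \<alpha> x0 (T(k := u1)) S k = z" for u1
    unfolding x_def y_def gp_def z_def by (rule gt_prefix; simp)+
  have L: "LHSq grad W n m \<alpha> x0 k (T(k := u1, Suc k := u3)) (S(k := u2)) =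
     (\<Sum>i<n. (norm (gvec grad m (\<lambda>i j. if j = u2 i then x i else z i j)
             (\<lambda>i. \<Sum>r<n. W i r *\<^sub>R (x r - \<alpha> *\<^sub>R (\<Sum>r'<n. W r r' *\<^sub>R (y r' + gvec grad m z x u1 r' - gp r')))) u3 i
           - grad_loc grad m i ((\<lambda>i. \<Sum>r<n. W i r *\<^sub>R (x r - \<alpha> *\<^sub>R (\<Sum>r'<n. W r r' *\<^sub>R (y r' + gvec grad m z x u1 r' - gp r')))) i)))\<^sup>2)"
    for u1 u2 u3
    unfolding LHSq_def by (simp add: gt_Suc gt_g_def pre1 cong: if_cong)
  have Y: "Yq grad W n m \<alpha> x0 k (T(k := u1)) S = cons_err n (\<lambda>i. \<Sum>r'<n. W i r' *\<^sub>R (y r' + gvec grad m z x u1 r' - gp r'))"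
    for u1
    unfolding Yq_def by (simp add: gt_Suc gt_g_def pre2)
  have track: "avg n y = avg n gp" unfolding y_def gp_def by (rule tracking[OF ds])
  show ?thesis unfolding L Y Rq_def x_def[symmetric] z_def[symmetric]
    by (rule core_ineq[OF track])
qed

end

lemma meas_restrict:
  fixes X :: "'j \<Rightarrow> 'w \<Rightarrow> nat"
  assumes fin: "finite J" and meas: "\<And>j. j \<in> J \<Longrightarrow> X j \<in> measurable N (count_space UNIV)"
  shows "(\<lambda>\<omega>. restrict (\<lambda>j. X j \<omega>) J) \<in> measurable N (count_space (PiE J (\<lambda>_. UNIV)))"
proof (subst measurable_count_space_eq_countable)
  show "countable (PiE J (\<lambda>_. UNIV :: nat set))" using fin by (intro countable_PiE) auto
  show "(\<lambda>\<omega>. restrict (\<lambda>j. X j \<omega>) J) \<in> space N \<rightarrow> PiE J (\<lambda>_. UNIV) \<and>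
    (\<forall>a\<in>PiE J (\<lambda>_. UNIV). (\<lambda>\<omega>. restrict (\<lambda>j. X j \<omega>) J) -` {a} \<inter> space N \<in> sets N)"
  proof (intro conjI ballI)
    show "(\<lambda>\<omega>. restrict (\<lambda>j. X j \<omega>) J) \<in> space N \<rightarrow> PiE J (\<lambda>_. UNIV)" by auto
    fix a assume a: "a \<in> PiE J (\<lambda>_. UNIV :: nat set)"
    have eq: "(\<lambda>\<omega>. restrict (\<lambda>j. X j \<omega>) J) -` {a} \<inter> space N = {\<omega>\<in>space N. \<forall>j\<in>J. X j \<omega> = a j}"
    proof (intro set_eqI iffI)
      fix \<omega> assume "\<omega> \<in> (\<lambda>\<omega>. restrict (\<lambda>j. X j \<omega>) J) -` {a} \<inter> space N"
      then show "\<omega> \<in> {\<omega>\<in>space N. \<forall>j\<in>J. X j \<omega> = a j}" by (auto dest: fun_cong)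
    next
      fix \<omega> assume "\<omega> \<in> {\<omega>\<in>space N. \<forall>j\<in>J. X j \<omega> = a j}"
      then show "\<omega> \<in> (\<lambda>\<omega>. restrict (\<lambda>j. X j \<omega>) J) -` {a} \<inter> space N"
        using a by (auto simp: restrict_def PiE_def extensional_def)
    qed
    show "(\<lambda>\<omega>. restrict (\<lambda>j. X j \<omega>) J) -` {a} \<inter> space N \<in> sets N"
    proof (cases "J = {}")
      case True then show ?thesis unfolding eq by simp
    next
      case False
      have "{\<omega>\<in>space N. X j \<omega> = a j} \<in> sets N" if "j \<in> J" for j
      proof -
        have "X j -` {a j} \<inter> space N \<in> sets N" using meas[OF that] by (rule measurable_sets) simp
        moreover have "X j -` {a j} \<inter> space N = {\<omega>\<in>space N. X j \<omega> = a j}" by auto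
        ultimately show ?thesis by simp
      qed
      then show ?thesis unfolding eq using fin False by (intro sets.sets_Collect_finite_All') auto
    qed
  qed
qed

lemma meas_fun_of:
  fixes X :: "'j \<Rightarrow> 'w \<Rightarrow> nat" and \<Phi> :: "'w \<Rightarrow> real"
  assumes fin: "finite J" and meas: "\<And>j. j \<in> J \<Longrightarrow> X j \<in> measurable N (count_space UNIV)"
    and eq: "\<And>\<omega>. \<omega> \<in> space N \<Longrightarrow> \<Phi> \<omega> = G (restrict (\<lambda>j. X j \<omega>) J)"
  shows "\<Phi> \<in> borel_measurable N"
proof -
  have "(\<lambda>\<omega>. G (restrict (\<lambda>j. X j \<omega>) J)) \<in> borel_measurable N"
    by (rule measurable_compose[OF meas_restrict[OF fin meas]]) auto
  then show ?thesis using eq by (subst measurable_cong) auto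
qed

lemma integrable_fun_of:
  fixes X :: "'j \<Rightarrow> 'w \<Rightarrow> nat" and \<Phi> :: "'w \<Rightarrow> real"
  assumes ps: "prob_space N" and fin: "finite J" and meas: "\<And>j. j \<in> J \<Longrightarrow> X j \<in> measurable N (count_space UNIV)"
    and eq: "\<And>\<omega>. \<omega> \<in> space N \<Longrightarrow> \<Phi> \<omega> = G (restrict (\<lambda>j. X j \<omega>) J)"
    and ae: "AE \<omega> in N. \<forall>j\<in>J. X j \<omega> < m"
  shows "integrable N \<Phi>"
proof -
  interpret prob_space N by (rule ps)
  define B where "B = (\<Sum>v\<in>PiE J (\<lambda>_. {..<m}). \<bar>G v\<bar>)"
  have B0: "B \<ge> 0" unfolding B_def by (intro sum_nonneg) auto
  have i1: "integrable N (\<lambda>_. B)" by simp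
  have i2: "\<Phi> \<in> borel_measurable N" by (rule meas_fun_of[where G = G and X = X and J = J]) (use fin meas eq in auto)
  have i3: "AE x in N. norm (\<Phi> x) \<le> norm ((\<lambda>_. B) x)"
      using ae AE_space
    proof eventually_elim
      fix \<omega> assume lt: "\<forall>j\<in>J. X j \<omega> < m" and \<omega>: "\<omega> \<in> space N"
      have v: "restrict (\<lambda>j. X j \<omega>) J \<in> PiE J (\<lambda>_. {..<m})" using lt by auto
      have "\<bar>G (restrict (\<lambda>j. X j \<omega>) J)\<bar> \<le> B"
        unfolding B_def using fin v by (intro member_le_sum) (auto intro!: finite_PiE)
      then show "norm (\<Phi> \<omega>) \<le> norm ((\<lambda>_. B) \<omega>)" using eq[OF \<omega>] B0 by simp
    qed
  show ?thesis by (rule Bochner_Integration.integrable_bound[OF i1 i2 i3])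
qed

lemma AE_lt_m:
  fixes Y :: "'w \<Rightarrow> nat"
  assumes "Y \<in> measurable M (count_space UNIV)"
    and "distr M (count_space UNIV) Y = measure_pmf (pmf_of_set {..<m})" and "m \<ge> 1"
  shows "AE \<omega> in M. Y \<omega> < m"
proof -
  have s: "set_pmf (pmf_of_set {..<m}) = {..<m}" using assms(3) by (intro set_pmf_of_set) (auto simp: lessThan_empty_iff)
  have "AE x in measure_pmf (pmf_of_set {..<m}). x < m"
    using AE_measure_pmf[of "pmf_of_set {..<m}"] unfolding s by simp
  then have "AE x in distr M (count_space UNIV) Y. x < m" by (simp only: assms(2))
  then show ?thesis by (rule AE_distrD[OF assms(1)])
qed

lemma cond_exp_indep_event:
  assumes sf: "sigma_finite_subalgebra M F" and ps: "prob_space M" and E: "E \<in> sets M"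
    and indep: "\<And>A. A \<in> sets F \<Longrightarrow> measure M (A \<inter> E) = measure M A * measure M E"
  shows "AE \<omega> in M. real_cond_exp M F (indicator E) \<omega> = measure M E"
proof -
  interpret sigma_finite_subalgebra M F by (rule sf)
  interpret P: prob_space M by (rule ps)
  show ?thesis
  proof (rule real_cond_exp_charact)
    fix A assume A: "A \<in> sets F"
    then have AM: "A \<in> sets M" using subalg by (auto simp: subalgebra_def)
    have "(\<integral>x\<in>A. indicator E x \<partial>M) = (\<integral>x. indicator (A \<inter> E) x \<partial>M)"
      unfolding set_lebesgue_integral_def by (intro Bochner_Integration.integral_cong) (auto simp: indicator_def)
    also have "\<dots> = measure M (A \<inter> E)"
      using AM E by (simp add: Int_absorb2 sets.sets_into_space inf.absorb1 le_infI1)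
    also have "\<dots> = measure M A * measure M E" by (rule indep[OF A])
    also have "\<dots> = (\<integral>x\<in>A. measure M E \<partial>M)"
      using AM by (simp add: set_integral_const P.emeasure_finite)
    finally show "(\<integral>x\<in>A. indicator E x \<partial>M) = (\<integral>x\<in>A. measure M E \<partial>M)" .
  next
    show "integrable M (indicator E :: _ \<Rightarrow> real)" using E by (simp add: P.emeasure_finite less_top[symmetric])
    show "integrable M (\<lambda>_. measure M E)" by simp
    show "(\<lambda>_. measure M E) \<in> borel_measurable F" by simp
  qed
qed


locale probset = core grad W n m \<alpha> L
  for grad :: "nat \<Rightarrow> nat \<Rightarrow> 'v::euclidean_space \<Rightarrow> 'v" and W n m \<alpha> L +
  fixes M :: "'w measure" and tau s :: "nat \<Rightarrow> nat \<Rightarrow> 'w \<Rightarrow> nat" and x0 :: 'v and k :: nat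
  assumes ps: "prob_space M"
    and dtau: "\<And>t i. i < n \<Longrightarrow> distr M (count_space UNIV) (tau t i) = measure_pmf (pmf_of_set {..<m})"
    and dsv: "\<And>t i. i < n \<Longrightarrow> distr M (count_space UNIV) (s t i) = measure_pmf (pmf_of_set {..<m})"
    and ind: "prob_space.indep_vars M (\<lambda>_. count_space UNIV)
           (\<lambda>(b, t, i). if b then tau t i else s t i) (UNIV \<times> UNIV \<times> {..<n})"
begin

sublocale P: prob_space M by (rule ps)

abbreviation XX :: "bool \<times> nat \<times> nat \<Rightarrow> 'w \<Rightarrow> nat" where
  "XX \<equiv> (\<lambda>(b, t, i). if b then tau t i else s t i)"

lemma rv: "i < n \<Longrightarrow> XX (b, t, i) \<in> measurable M (count_space UNIV)"
  using ind unfolding P.indep_vars_def2 by auto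

lemma rvj: "j \<in> UNIV \<times> UNIV \<times> {..<n} \<Longrightarrow> XX j \<in> measurable M (count_space UNIV)"
  using rv by (cases j) auto

lemma rv_tau: "i < n \<Longrightarrow> tau t i \<in> measurable M (count_space UNIV)"
  using rv[of i True t] by simp
lemma rv_s: "i < n \<Longrightarrow> s t i \<in> measurable M (count_space UNIV)"
  using rv[of i False t] by simp

lemma distrX: "i < n \<Longrightarrow> distr M (count_space UNIV) (XX (b, t, i)) = measure_pmf (pmf_of_set {..<m})"
  using dtau dsv by (cases b) auto

lemma ae_lt:
  assumes "finite J" "J \<subseteq> UNIV \<times> UNIV \<times> {..<n}"
  shows "AE \<omega> in M. \<forall>j\<in>J. XX j \<omega> < m"
proof (rule eventually_ball_finite[OF assms(1)], intro ballI)
  fix j assume "j \<in> J"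
  then obtain b t i where j: "j = (b, t, i)" "i < n" using assms(2) by auto
  show "AE \<omega> in M. XX j \<omega> < m"
    unfolding j(1) by (rule AE_lt_m[OF rv[OF j(2)] distrX[OF j(2)] m1])
qed

abbreviation GG where
  "GG \<equiv> (\<Union>t<k. \<Union>i<n. {tau t i -` A \<inter> space M | A. True} \<union> {s t i -` A \<inter> space M | A. True})"

abbreviation FF where "FF \<equiv> filt M tau s n k"

lemma GG_pow: "GG \<subseteq> Pow (space M)" by auto

lemma sets_FF: "sets FF = sigma_sets (space M) GG"
  unfolding filt_def by (rule sets_measure_of[OF GG_pow])

lemma space_FF: "space FF = space M"
  unfolding filt_def by (simp add: space_measure_of_conv)

lemma GG_sets: "GG \<subseteq> sets M"
proof
  fix a assume "a \<in> GG"
  then obtain t i A where ti: "i < n" and "a = tau t i -` A \<inter> space M \<or> a = s t i -` A \<inter> space M" by blast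
  then show "a \<in> sets M"
    using measurable_sets[OF rv_tau[OF ti], of A] measurable_sets[OF rv_s[OF ti], of A] by auto
qed

lemma sub: "subalgebra M FF"
  unfolding subalgebra_def space_FF sets_FF using sets.sigma_sets_subset[OF GG_sets] by simp

lemma sfs: "sigma_finite_subalgebra M FF"
proof -
  have "finite_measure_subalgebra M FF"
    using ps sub unfolding prob_space_def finite_measure_subalgebra_def finite_measure_subalgebra_axioms_def
    by simp
  then show ?thesis by (rule finite_measure_subalgebra_is_sigma_finite)
qed

lemma meas_FF:
  assumes "j \<in> UNIV \<times> {..<k} \<times> {..<n}"
  shows "XX j \<in> measurable FF (count_space UNIV)"
proof -
  obtain b t i where j: "j = (b, t, i)" "t < k" "i < n" using assms by auto
  show ?thesis
  proof (rule measurableI)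
    fix A :: "nat set"
    have "XX j -` A \<inter> space M \<in> {tau t i -` A \<inter> space M | A. True} \<union> {s t i -` A \<inter> space M | A. True}"
      using j by (cases b) auto
    then have "XX j -` A \<inter> space M \<in> GG"
      using j(2,3) by (intro UN_I) auto
    then show "XX j -` A \<inter> space FF \<in> sets FF"
      unfolding space_FF sets_FF by auto
  qed auto
qed

end

context probset begin

abbreviation UU where "UU \<equiv> PP \<times> PP \<times> PP"

definition Ifut :: "(bool \<times> nat \<times> nat) set" where
  "Ifut = ({True} \<times> {k, Suc k} \<times> {..<n}) \<union> ({False} \<times> {k} \<times> {..<n})"

definition uu :: "(nat \<Rightarrow> nat) \<times> (nat \<Rightarrow> nat) \<times> (nat \<Rightarrow> nat) \<Rightarrow> bool \<times> nat \<times> nat \<Rightarrow> nat" where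
  "uu u j = (case j of (b, t, i) \<Rightarrow> if b then (if t = k then fst u i else snd (snd u) i) else fst (snd u) i)"

definition Ev where
  "Ev u = {\<omega> \<in> space M. \<forall>i<n. tau k i \<omega> = fst u i \<and> s k i \<omega> = fst (snd u) i \<and> tau (Suc k) i \<omega> = snd (snd u) i}"

lemma Ifut_fin: "finite Ifut" unfolding Ifut_def by auto
lemma Ifut_ne: "Ifut \<noteq> {}" unfolding Ifut_def using n1 by (auto simp: lessThan_empty_iff)
lemma Ifut_sub: "Ifut \<subseteq> UNIV \<times> UNIV \<times> {..<n}" unfolding Ifut_def by auto

lemma card_Ifut: "card Ifut = 3 * n"
proof -
  have d: "({True} \<times> {k, Suc k} \<times> {..<n}) \<inter> ({False} \<times> {k} \<times> {..<n}) = {}" by auto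
  have "card Ifut = card ({True} \<times> {k, Suc k} \<times> {..<n}) + card ({False} \<times> {k} \<times> {..<n})"
    unfolding Ifut_def by (rule card_Un_disjoint) (use d in auto)
  also have "\<dots> = 2 * n + n" by (simp add: card_cartesian_product)
  finally show ?thesis by simp
qed

lemma mem_Ifut: "j \<in> Ifut \<longleftrightarrow> (\<exists>i<n. j = (True, k, i) \<or> j = (True, Suc k, i) \<or> j = (False, k, i))"
  unfolding Ifut_def by auto

lemma Ev_INT: "Ev u = (\<Inter>j\<in>Ifut. XX j -` {uu u j} \<inter> space M)"
proof (intro set_eqI iffI)
  fix \<omega> assume w: "\<omega> \<in> Ev u"
  show "\<omega> \<in> (\<Inter>j\<in>Ifut. XX j -` {uu u j} \<inter> space M)"
  proof (rule INT_I)
    fix j assume "j \<in> Ifut"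
    then obtain i where i: "i < n" and "j = (True, k, i) \<or> j = (True, Suc k, i) \<or> j = (False, k, i)"
      unfolding mem_Ifut by blast
    then consider "j = (True, k, i)" | "j = (True, Suc k, i)" | "j = (False, k, i)" by blast
    then show "\<omega> \<in> XX j -` {uu u j} \<inter> space M"
      using w i by cases (simp_all add: uu_def Ev_def)
  qed
next
  fix \<omega> assume a: "\<omega> \<in> (\<Inter>j\<in>Ifut. XX j -` {uu u j} \<inter> space M)"
  have "\<omega> \<in> space M" using a Ifut_ne by auto
  moreover have "tau k i \<omega> = fst u i \<and> s k i \<omega> = fst (snd u) i \<and> tau (Suc k) i \<omega> = snd (snd u) i" if "i < n" for i
  proof -
    have "(True, k, i) \<in> Ifut" "(False, k, i) \<in> Ifut" "(True, Suc k, i) \<in> Ifut"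
      using that unfolding mem_Ifut by auto
    then have "XX (True, k, i) \<omega> = uu u (True, k, i)" "XX (False, k, i) \<omega> = uu u (False, k, i)"
       "XX (True, Suc k, i) \<omega> = uu u (True, Suc k, i)"
      using a by blast+
    then show ?thesis by (simp add: uu_def)
  qed
  ultimately show "\<omega> \<in> Ev u" unfolding Ev_def by auto
qed

lemma Ev_sets: "Ev u \<in> sets M"
proof -
  have "XX j -` {uu u j} \<inter> space M \<in> sets M" if "j \<in> Ifut" for j
    using rvj[of j] that Ifut_sub by (intro measurable_sets) auto
  then show ?thesis unfolding Ev_INT by (intro sets.finite_INT Ifut_fin Ifut_ne)
qed

lemma prob_Ev:
  assumes u: "u \<in> UU"
  shows "P.prob (Ev u) = (1 / real m) ^ (3 * n)"
proof -
  have "P.prob (Ev u) = (\<Prod>j\<in>Ifut. P.prob (XX j -` {uu u j} \<inter> space M))"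
    unfolding Ev_INT by (rule P.indep_varsD[OF ind Ifut_ne Ifut_fin Ifut_sub]) simp
  also have "\<dots> = (\<Prod>j\<in>Ifut. 1 / real m)"
  proof (intro prod.cong refl)
    fix j assume j: "j \<in> Ifut"
    obtain b t i where bti: "j = (b, t, i)" by (cases j)
    have i: "i < n" and cs: "(b \<and> t = k) \<or> (b \<and> t = Suc k) \<or> (\<not> b \<and> t = k)"
      using j unfolding bti mem_Ifut by auto
    have u3: "fst u \<in> PP" "fst (snd u) \<in> PP" "snd (snd u) \<in> PP" using u unfolding mem_Times_iff by blast+
    have "fst u i < m" "fst (snd u) i < m" "snd (snd u) i < m"
      using PiE_mem[OF u3(1), of i] PiE_mem[OF u3(2), of i] PiE_mem[OF u3(3), of i] i by blast+
    then have lt: "uu u j < m" using cs unfolding bti uu_def by auto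
    have "P.prob (XX j -` {uu u j} \<inter> space M) = measure (distr M (count_space UNIV) (XX j)) {uu u j}"
      unfolding bti using rv[OF i] by (subst measure_distr) auto
    also have "\<dots> = measure (measure_pmf (pmf_of_set {..<m})) {uu u j}"
      unfolding bti using distrX[OF i] by simp
    also have "\<dots> = 1 / real m"
      using lt m1 by (simp add: measure_pmf_single pmf_of_set lessThan_empty_iff)
    finally show "P.prob (XX j -` {uu u j} \<inter> space M) = 1 / real m" .
  qed
  also have "\<dots> = (1 / real m) ^ (3 * n)" using card_Ifut by simp
  finally show ?thesis .
qed

definition EE where "EE j = sigma_sets (space M) {XX j -` A \<inter> space M | A. A \<in> sets (count_space UNIV)}"
definition Ig where "Ig b = (if b then UNIV \<times> {..<k} \<times> {..<n} else Ifut)"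

lemma indep_Ev:
  assumes A: "A \<in> sets FF"
  shows "P.prob (A \<inter> Ev u) = P.prob A * P.prob (Ev u)"
proof -
  have I0: "P.indep_sets EE (UNIV \<times> UNIV \<times> {..<n})"
    using ind unfolding P.indep_vars_def EE_def by auto
  have EEpow: "{XX j -` A \<inter> space M | A. A \<in> sets (count_space UNIV)} \<subseteq> Pow (space M)" for j by auto
  have I1: "P.indep_sets (\<lambda>b. sigma_sets (space M) (\<Union>j\<in>Ig b. EE j)) UNIV"
  proof (rule P.indep_sets_collect_sigma)
    show "P.indep_sets EE (\<Union>b. Ig b)"
      by (rule P.indep_sets_mono_index[OF _ I0]) (auto simp: Ig_def Ifut_def)
    show "Int_stable (EE j)" for j
    proof -
      interpret S: sigma_algebra "space M" "EE j" unfolding EE_def by (rule sigma_algebra_sigma_sets[OF EEpow])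
      show ?thesis unfolding Int_stable_def by auto
    qed
    show "disjoint_family_on Ig UNIV"
      unfolding disjoint_family_on_def Ig_def Ifut_def by auto
  qed
  have EEsub: "EE j \<subseteq> Pow (space M)" for j
    unfolding EE_def using sigma_sets_into_sp[OF EEpow] by blast
  have Amem: "A \<in> sigma_sets (space M) (\<Union>j\<in>Ig True. EE j)"
  proof -
    have "GG \<subseteq> (\<Union>j\<in>Ig True. EE j)"
    proof
      fix a assume "a \<in> GG"
      then obtain t i B where ti: "t < k" "i < n" and "a = tau t i -` B \<inter> space M \<or> a = s t i -` B \<inter> space M" by blast
      then consider "a = XX (True, t, i) -` B \<inter> space M" | "a = XX (False, t, i) -` B \<inter> space M" by auto
      then show "a \<in> (\<Union>j\<in>Ig True. EE j)"
      proof cases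
        case 1 then have "a \<in> EE (True, t, i)" unfolding EE_def by (intro sigma_sets.Basic) auto
        then show ?thesis using ti unfolding Ig_def by auto
      next
        case 2 then have "a \<in> EE (False, t, i)" unfolding EE_def by (intro sigma_sets.Basic) auto
        then show ?thesis using ti unfolding Ig_def by auto
      qed
    qed
    then have "sigma_sets (space M) GG \<subseteq> sigma_sets (space M) (\<Union>j\<in>Ig True. EE j)"
      by (intro sigma_sets_mono order_trans[OF _ sigma_sets_superset_generator])
    then show ?thesis using A unfolding sets_FF by auto
  qed
  have Emem: "Ev u \<in> sigma_sets (space M) (\<Union>j\<in>Ig False. EE j)"
  proof -
    have sp: "(\<Union>j\<in>Ig False. EE j) \<subseteq> Pow (space M)" using EEsub by (simp add: UN_subset_iff)
    interpret S: sigma_algebra "space M" "sigma_sets (space M) (\<Union>j\<in>Ig False. EE j)"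
      by (rule sigma_algebra_sigma_sets[OF sp])
    show ?thesis unfolding Ev_INT
    proof (rule S.finite_INT[OF Ifut_fin Ifut_ne])
      fix j assume "j \<in> Ifut"
      then have "XX j -` {uu u j} \<inter> space M \<in> EE j" unfolding EE_def by (intro sigma_sets.Basic) auto
      then show "XX j -` {uu u j} \<inter> space M \<in> sigma_sets (space M) (\<Union>j\<in>Ig False. EE j)"
        using \<open>j \<in> Ifut\<close> unfolding Ig_def by (auto intro: sigma_sets.Basic)
    qed
  qed
  have "P.prob (\<Inter>b\<in>UNIV. (if b then A else Ev u)) = (\<Prod>b\<in>UNIV. P.prob (if b then A else Ev u))"
    by (rule P.indep_setsD[OF I1]) (use Amem Emem in auto)
  then show ?thesis by (simp add: UNIV_bool Int_commute)
qed

end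

lemma sum_prod3: "(\<Sum>u\<in>A \<times> B. g u) = (\<Sum>a\<in>A. \<Sum>b\<in>B. g (a, b))"
  by (simp add: sum.cartesian_product split_def)

context probset begin

abbreviation Tw where "Tw \<omega> \<equiv> (\<lambda>t i. tau t i \<omega>)"
abbreviation Sw where "Sw \<omega> \<equiv> (\<lambda>t i. s t i \<omega>)"
abbreviation Tv where "Tv (v :: bool \<times> nat \<times> nat \<Rightarrow> nat) \<equiv> (\<lambda>t i. v (True, t, i))"
abbreviation Sv where "Sv (v :: bool \<times> nat \<times> nat \<Rightarrow> nat) \<equiv> (\<lambda>t i. v (False, t, i))"

definition fu where "fu u \<omega> = LHSq grad W n m \<alpha> x0 k ((Tw \<omega>)(k := fst u, Suc k := snd (snd u))) ((Sw \<omega>)(k := fst (snd u)))"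
definition fy where "fy u \<omega> = Yq grad W n m \<alpha> x0 k ((Tw \<omega>)(k := fst u)) (Sw \<omega>)"

abbreviation Jh where "Jh \<equiv> UNIV \<times> {..<k} \<times> {..<n}"
abbreviation J2 where "J2 \<equiv> UNIV \<times> {..<Suc (Suc k)} \<times> {..<n}"
abbreviation J3 where "J3 \<equiv> UNIV \<times> {..<Suc k} \<times> {..<n}"

lemma fu_eq: "fu u \<omega> = LHSq grad W n m \<alpha> x0 k ((Tv (restrict (\<lambda>j. XX j \<omega>) Jh))(k := fst u, Suc k := snd (snd u)))
      ((Sv (restrict (\<lambda>j. XX j \<omega>) Jh))(k := fst (snd u)))"
  unfolding fu_def by (rule LHSq_cong) auto

lemma fy_eq: "fy u \<omega> = Yq grad W n m \<alpha> x0 k ((Tv (restrict (\<lambda>j. XX j \<omega>) Jh))(k := fst u))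
      (Sv (restrict (\<lambda>j. XX j \<omega>) Jh))"
  unfolding fy_def by (rule Yq_cong) auto

lemma L_eq: "LHSq grad W n m \<alpha> x0 k (Tw \<omega>) (Sw \<omega>) = LHSq grad W n m \<alpha> x0 k (Tv (restrict (\<lambda>j. XX j \<omega>) J2)) (Sv (restrict (\<lambda>j. XX j \<omega>) J2))"
  by (rule LHSq_cong) auto

lemma Y_eq: "Yq grad W n m \<alpha> x0 k (Tw \<omega>) (Sw \<omega>) = Yq grad W n m \<alpha> x0 k (Tv (restrict (\<lambda>j. XX j \<omega>) J3)) (Sv (restrict (\<lambda>j. XX j \<omega>) J3))"
  by (rule Yq_cong) auto

lemma measJh: "j \<in> Jh \<Longrightarrow> XX j \<in> measurable M (count_space UNIV)"
  by (rule rvj) auto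

lemma fu_meas: "fu u \<in> borel_measurable FF"
  apply (rule meas_fun_of[where J = Jh and X = XX])
    apply simp
   apply (erule meas_FF)
  apply (rule fu_eq)
  done

lemma fy_meas: "fy u \<in> borel_measurable FF"
  apply (rule meas_fun_of[where J = Jh and X = XX])
    apply simp
   apply (erule meas_FF)
  apply (rule fy_eq)
  done

lemma fu_int: "integrable M (fu u)"
  apply (rule integrable_fun_of[where J = Jh and X = XX and m = m, OF ps])
     apply simp
    apply (erule measJh)
   apply (rule fu_eq)
  apply (rule ae_lt)
   apply auto
  done

lemma fy_int: "integrable M (fy u)"
  apply (rule integrable_fun_of[where J = Jh and X = XX and m = m, OF ps])
     apply simp
    apply (erule measJh)
   apply (rule fy_eq)
  apply (rule ae_lt)
   apply auto
  done

lemma L_meas: "(\<lambda>\<omega>. LHSq grad W n m \<alpha> x0 k (Tw \<omega>) (Sw \<omega>)) \<in> borel_measurable M"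
  apply (rule meas_fun_of[where J = J2 and X = XX])
    apply simp
   apply (rule rvj, force)
  apply (rule L_eq)
  done

lemma Y_meas: "(\<lambda>\<omega>. Yq grad W n m \<alpha> x0 k (Tw \<omega>) (Sw \<omega>)) \<in> borel_measurable M"
  apply (rule meas_fun_of[where J = J3 and X = XX])
    apply simp
   apply (rule rvj, force)
  apply (rule Y_eq)
  done

lemma decomp_ae:
  "AE \<omega> in M. LHSq grad W n m \<alpha> x0 k (Tw \<omega>) (Sw \<omega>) = (\<Sum>u\<in>UU. indicator (Ev u) \<omega> * fu u \<omega>)
     \<and> Yq grad W n m \<alpha> x0 k (Tw \<omega>) (Sw \<omega>) = (\<Sum>u\<in>UU. indicator (Ev u) \<omega> * fy u \<omega>)"
proof -
  have a: "AE \<omega> in M. \<forall>j\<in>J2. XX j \<omega> < m" by (rule ae_lt) auto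
  show ?thesis using a AE_space
proof eventually_elim
  case (elim \<omega>)
  have lt: "tau k i \<omega> < m" "s k i \<omega> < m" "tau (Suc k) i \<omega> < m" if "i < n" for i
  proof -
    have mm: "(True, k, i) \<in> J2" "(False, k, i) \<in> J2" "(True, Suc k, i) \<in> J2" using that by auto
    have "XX (True, k, i) \<omega> < m" "XX (False, k, i) \<omega> < m" "XX (True, Suc k, i) \<omega> < m"
      using bspec[OF elim(1) mm(1)] bspec[OF elim(1) mm(2)] bspec[OF elim(1) mm(3)] by (simp_all only:)
    then show "tau k i \<omega> < m" "s k i \<omega> < m" "tau (Suc k) i \<omega> < m" by simp_all
  qed
  define us where "us = (restrict (\<lambda>i. tau k i \<omega>) {..<n}, restrict (\<lambda>i. s k i \<omega>) {..<n}, restrict (\<lambda>i. tau (Suc k) i \<omega>) {..<n})"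
  have usU: "us \<in> UU" unfolding us_def using lt by auto
  have iff: "\<omega> \<in> Ev u \<longleftrightarrow> u = us" if u: "u \<in> UU" for u
  proof
    assume e: "\<omega> \<in> Ev u"
    obtain u1 u2 u3 where uu: "u = (u1, u2, u3)" by (cases u) auto
    have p: "u1 \<in> PP" "u2 \<in> PP" "u3 \<in> PP" using u unfolding uu by auto
    have "u1 = restrict (\<lambda>i. tau k i \<omega>) {..<n}"
      by (rule PiE_ext[OF p(1)]) (use e lt in \<open>auto simp: Ev_def uu\<close>)
    moreover have "u2 = restrict (\<lambda>i. s k i \<omega>) {..<n}"
      by (rule PiE_ext[OF p(2)]) (use e lt in \<open>auto simp: Ev_def uu\<close>)
    moreover have "u3 = restrict (\<lambda>i. tau (Suc k) i \<omega>) {..<n}"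
      by (rule PiE_ext[OF p(3)]) (use e lt in \<open>auto simp: Ev_def uu\<close>)
    ultimately show "u = us" unfolding uu us_def by simp
  next
    assume "u = us"
    then show "\<omega> \<in> Ev u" using elim(2) unfolding Ev_def us_def by auto
  qed
  have s1: "(\<Sum>u\<in>UU. indicator (Ev u) \<omega> * F u) = F us" for F :: "_ \<Rightarrow> real"
  proof -
    have "(\<Sum>u\<in>UU. indicator (Ev u) \<omega> * F u) = (\<Sum>u\<in>UU. if u = us then F u else 0)"
      by (intro sum.cong refl) (simp add: iff indicator_def)
    also have "\<dots> = F us"
    proof -
      have fin: "finite UU" by (intro finite_cartesian_product finite_PiE) auto
      show ?thesis using usU sum.delta[OF fin, of us F] by simp
    qed
    finally show ?thesis .
  qed
  have "fu us \<omega> = LHSq grad W n m \<alpha> x0 k (Tw \<omega>) (Sw \<omega>)"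
    unfolding fu_def us_def by (rule LHSq_cong) auto
  moreover have "fy us \<omega> = Yq grad W n m \<alpha> x0 k (Tw \<omega>) (Sw \<omega>)"
    unfolding fy_def us_def by (rule Yq_cong) auto
  ultimately show ?case using s1[of "\<lambda>u. fu u \<omega>"] s1[of "\<lambda>u. fy u \<omega>"] by simp
qed
qed

lemma finUU: "finite UU" by (intro finite_cartesian_product finite_PiE) auto

lemma cond_sum:
  fixes fv :: "_ \<Rightarrow> 'w \<Rightarrow> real"
  assumes fmeas: "\<And>u. fv u \<in> borel_measurable FF" and fint: "\<And>u. integrable M (fv u)"
    and gmeas: "g \<in> borel_measurable M"
    and ae: "AE \<omega> in M. g \<omega> = (\<Sum>u\<in>UU. indicator (Ev u) \<omega> * fv u \<omega>)"
  shows "AE \<omega> in M. real_cond_exp M FF g \<omega> = (\<Sum>u\<in>UU. fv u \<omega> * (1 / real m) ^ (3 * n))"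
proof -
  interpret SF: sigma_finite_subalgebra M FF by (rule sfs)
  define h where "h u \<omega> = (if u \<in> UU then indicator (Ev u) \<omega> * fv u \<omega> else 0)" for u \<omega>
  have hint: "integrable M (h u)" for u
  proof (cases "u \<in> UU")
    case True
    have "integrable M (\<lambda>\<omega>. indicator (Ev u) \<omega> *\<^sub>R fv u \<omega>)"
      by (rule integrable_mult_indicator[OF Ev_sets fint])
    then show ?thesis unfolding h_def using True by simp
  next
    case False then show ?thesis unfolding h_def by simp
  qed
  have sum_meas: "(\<lambda>\<omega>. \<Sum>u\<in>UU. h u \<omega>) \<in> borel_measurable M"
    using hint by (intro borel_measurable_sum) (auto intro: borel_measurable_integrable)
  have a1: "AE \<omega> in M. real_cond_exp M FF g \<omega> = real_cond_exp M FF (\<lambda>\<omega>. \<Sum>u\<in>UU. h u \<omega>) \<omega>"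
  proof (rule SF.real_cond_exp_cong[OF _ gmeas sum_meas])
    show "AE \<omega> in M. g \<omega> = (\<Sum>u\<in>UU. h u \<omega>)"
      using ae by eventually_elim (simp add: h_def)
  qed
  have a2: "AE \<omega> in M. real_cond_exp M FF (\<lambda>\<omega>. \<Sum>u\<in>UU. h u \<omega>) \<omega> = (\<Sum>u\<in>UU. real_cond_exp M FF (h u) \<omega>)"
    by (rule SF.real_cond_exp_sum[OF hint])
  have a3: "AE \<omega> in M. \<forall>u\<in>UU. real_cond_exp M FF (h u) \<omega> = fv u \<omega> * (1 / real m) ^ (3 * n)"
  proof (rule eventually_ball_finite[OF finUU], intro ballI)
    fix u assume u: "u \<in> UU"
    have he: "h u = (\<lambda>\<omega>. fv u \<omega> * indicator (Ev u) \<omega>)"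
      unfolding h_def using u by (auto simp: mult.commute)
    have int2: "integrable M (\<lambda>\<omega>. fv u \<omega> * indicator (Ev u) \<omega>)" using hint[of u] he by simp
    have b1: "AE \<omega> in M. real_cond_exp M FF (\<lambda>\<omega>. fv u \<omega> * indicator (Ev u) \<omega>) \<omega> = fv u \<omega> * real_cond_exp M FF (indicator (Ev u)) \<omega>"
      by (rule SF.real_cond_exp_mult[OF fmeas borel_measurable_indicator[OF Ev_sets] int2])
    have b2: "AE \<omega> in M. real_cond_exp M FF (indicator (Ev u)) \<omega> = measure M (Ev u)"
      by (rule cond_exp_indep_event[OF sfs ps Ev_sets indep_Ev])
    show "AE \<omega> in M. real_cond_exp M FF (h u) \<omega> = fv u \<omega> * (1 / real m) ^ (3 * n)"
      using b1 b2 by eventually_elim (simp add: he prob_Ev[OF u])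
  qed
  show ?thesis using a1 a2 a3 by eventually_elim simp
qed

lemma cond_L: "AE \<omega> in M. real_cond_exp M FF (\<lambda>\<omega>. LHSq grad W n m \<alpha> x0 k (Tw \<omega>) (Sw \<omega>)) \<omega>
    = (\<Sum>u\<in>UU. fu u \<omega> * (1 / real m) ^ (3 * n))"
  by (rule cond_sum[OF fu_meas fu_int L_meas]) (use decomp_ae in \<open>eventually_elim, simp\<close>)

lemma cond_Y: "AE \<omega> in M. real_cond_exp M FF (\<lambda>\<omega>. Yq grad W n m \<alpha> x0 k (Tw \<omega>) (Sw \<omega>)) \<omega>
    = (\<Sum>u\<in>UU. fy u \<omega> * (1 / real m) ^ (3 * n))"
  by (rule cond_sum[OF fy_meas fy_int Y_meas]) (use decomp_ae in \<open>eventually_elim, simp\<close>)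

lemma det_ineq:
  "(\<Sum>u\<in>UU. fu u \<omega> * (1 / real m) ^ (3 * n))
     \<le> Rq grad W n m \<alpha> L x0 k (Tw \<omega>) (Sw \<omega>) + 4 * \<alpha>\<^sup>2 * L\<^sup>2 * (\<Sum>u\<in>UU. fy u \<omega> * (1 / real m) ^ (3 * n))"
proof -
  define p where "p = (1 / real m) ^ (3 * n)"
  define Mm where "Mm = real m"
  have M0: "Mm > 0" using m1 by (simp add: Mm_def)
  have p3: "p * Mm ^ (3 * n) = 1" unfolding p_def Mm_def using M0 Mm_def
    by (simp add: power_one_over[symmetric] power_mult_distrib[symmetric])
  have sfu: "(\<Sum>u\<in>UU. fu u \<omega>) = (\<Sum>u1\<in>PP. \<Sum>u2\<in>PP. \<Sum>u3\<in>PP. LHSq grad W n m \<alpha> x0 k ((Tw \<omega>)(k := u1, Suc k := u3)) ((Sw \<omega>)(k := u2)))"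
    unfolding fu_def sum_prod3 by simp
  have sfy: "(\<Sum>u\<in>UU. fy u \<omega>) = Mm ^ (2 * n) * (\<Sum>u1\<in>PP. Yq grad W n m \<alpha> x0 k ((Tw \<omega>)(k := u1)) (Sw \<omega>))"
    unfolding fy_def sum_prod3 by (simp add: cardPP Mm_def sum_distrib_left mult_2 power_add mult.assoc)
  have core: "(\<Sum>u\<in>UU. fu u \<omega>) \<le> Mm ^ (3 * n) * Rq grad W n m \<alpha> L x0 k (Tw \<omega>) (Sw \<omega>)
      + 4 * \<alpha>\<^sup>2 * L\<^sup>2 * (\<Sum>u\<in>UU. fy u \<omega>)"
    unfolding sfu sfy Mm_def by (rule core_TS)
  have p0: "p \<ge> 0" unfolding p_def by simp
  have "(\<Sum>u\<in>UU. fu u \<omega> * p) = p * (\<Sum>u\<in>UU. fu u \<omega>)" by (simp add: sum_distrib_left mult.commute)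
  also have "\<dots> \<le> p * (Mm ^ (3 * n) * Rq grad W n m \<alpha> L x0 k (Tw \<omega>) (Sw \<omega>)
      + 4 * \<alpha>\<^sup>2 * L\<^sup>2 * (\<Sum>u\<in>UU. fy u \<omega>))" by (rule mult_left_mono[OF core p0])
  also have "\<dots> = (p * Mm ^ (3 * n)) * Rq grad W n m \<alpha> L x0 k (Tw \<omega>) (Sw \<omega>)
      + 4 * \<alpha>\<^sup>2 * L\<^sup>2 * (\<Sum>u\<in>UU. fy u \<omega> * p)"
    by (simp add: algebra_simps sum_distrib_left sum_distrib_right)
  finally have X: "(\<Sum>u\<in>UU. fu u \<omega> * p) \<le> (p * Mm ^ (3 * n)) * Rq grad W n m \<alpha> L x0 k (Tw \<omega>) (Sw \<omega>)
      + 4 * \<alpha>\<^sup>2 * L\<^sup>2 * (\<Sum>u\<in>UU. fy u \<omega> * p)" .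
  show ?thesis using X unfolding p3 by (simp add: p_def)
qed

lemma main:
  "AE \<omega> in M. real_cond_exp M FF (\<lambda>\<omega>. LHSq grad W n m \<alpha> x0 k (Tw \<omega>) (Sw \<omega>)) \<omega>
     \<le> Rq grad W n m \<alpha> L x0 k (Tw \<omega>) (Sw \<omega>)
       + 4 * \<alpha>\<^sup>2 * L\<^sup>2 * real_cond_exp M FF (\<lambda>\<omega>. Yq grad W n m \<alpha> x0 k (Tw \<omega>) (Sw \<omega>)) \<omega>"
  using cond_L cond_Y by eventually_elim (simp add: det_ineq)

end

theorem lemma6:
  fixes M :: "'w measure"
    and tau s :: "nat \<Rightarrow> nat \<Rightarrow> 'w \<Rightarrow> nat"
    and f :: "nat \<Rightarrow> nat \<Rightarrow> 'v::euclidean_space \<Rightarrow> real"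
    and grad :: "nat \<Rightarrow> nat \<Rightarrow> 'v \<Rightarrow> 'v"
    and W :: "nat \<Rightarrow> nat \<Rightarrow> real"
    and n m :: nat and L \<alpha> :: real and x0 :: 'v and k :: nat
  assumes "prob_space M"
    and "n \<ge> 1" and "m \<ge> 1"
    and "\<And>i j x. i < n \<Longrightarrow> j < m \<Longrightarrow> (f i j has_derivative (\<lambda>h. grad i j x \<bullet> h)) (at x)"
    and "L > 0"
    and "\<And>i j x y. i < n \<Longrightarrow> j < m \<Longrightarrow> norm (grad i j x - grad i j y) \<le> L * norm (x - y)"
    and "bdd_below (range (\<lambda>x. (1 / real n) * (\<Sum>i<n. (1 / real m) * (\<Sum>j<m. f i j x))))"
    and "nonneg_mat n W" and "primitive_mat n W" and "doubly_stochastic n W"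
    and "\<And>t i. i < n \<Longrightarrow> distr M (count_space UNIV) (tau t i) = measure_pmf (pmf_of_set {..<m})"
    and "\<And>t i. i < n \<Longrightarrow> distr M (count_space UNIV) (s t i) = measure_pmf (pmf_of_set {..<m})"
    and "prob_space.indep_vars M (\<lambda>_. count_space UNIV)
           (\<lambda>(b, t, i). if b then tau t i else s t i) (UNIV \<times> UNIV \<times> {..<n})"
    and "\<alpha> > 0" and "\<alpha> \<le> sqrt (real n) / (sqrt (8 * real m) * L)"
  shows "AE \<omega> in M.
     real_cond_exp M (filt M tau s n k)
       (\<lambda>\<omega>. \<Sum>i<n. (norm (gt_g grad W n m \<alpha> x0 (\<lambda>t i. tau t i \<omega>) (\<lambda>t i. s t i \<omega>) (Suc k) i
                     - grad_loc grad m i (gt_x grad W n m \<alpha> x0 (\<lambda>t i. tau t i \<omega>) (\<lambda>t i. s t i \<omega>) (Suc k) i)))\<^sup>2) \<omega>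
     \<le> 8.5 * L\<^sup>2 * cons_err n (gt_x grad W n m \<alpha> x0 (\<lambda>t i. tau t i \<omega>) (\<lambda>t i. s t i \<omega>) k)
       + 4 * real n * L\<^sup>2 * t_gap n m (gt_x grad W n m \<alpha> x0 (\<lambda>t i. tau t i \<omega>) (\<lambda>t i. s t i \<omega>) k)
                                   (gt_z grad W n m \<alpha> x0 (\<lambda>t i. tau t i \<omega>) (\<lambda>t i. s t i \<omega>) k)
       + 6 * real n * \<alpha>\<^sup>2 * L\<^sup>2 * (norm (avg n (\<lambda>i. grad_loc grad m i
                     (gt_x grad W n m \<alpha> x0 (\<lambda>t i. tau t i \<omega>) (\<lambda>t i. s t i \<omega>) k i))))\<^sup>2
       + 4 * \<alpha>\<^sup>2 * L\<^sup>2 * real_cond_exp M (filt M tau s n k)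
           (\<lambda>\<omega>. cons_err n (gt_y grad W n m \<alpha> x0 (\<lambda>t i. tau t i \<omega>) (\<lambda>t i. s t i \<omega>) (Suc k))) \<omega>"
proof -
  interpret probset grad W n m \<alpha> L M tau s x0 k
  proof (intro probset.intro core.intro probset_axioms.intro)
    show "1 \<le> n" by (rule assms(2))
    show "1 \<le> m" by (rule assms(3))
    show "0 < L" by (rule assms(5))
    show "norm (grad i j x - grad i j y) \<le> L * norm (x - y)" if "i < n" "j < m" for i j x y
      by (rule assms(6)[OF that])
    show "nonneg_mat n W" by (rule assms(8))
    show "doubly_stochastic n W" by (rule assms(10))
    show "0 < \<alpha>" by (rule assms(14))
    show "\<alpha> \<le> sqrt (real n) / (sqrt (8 * real m) * L)" by (rule assms(15))
    show "prob_space M" by (rule assms(1))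
    show "distr M (count_space UNIV) (tau t i) = measure_pmf (pmf_of_set {..<m})" if "i < n" for t i
      by (rule assms(11)[OF that])
    show "distr M (count_space UNIV) (s t i) = measure_pmf (pmf_of_set {..<m})" if "i < n" for t i
      by (rule assms(12)[OF that])
    show "prob_space.indep_vars M (\<lambda>_. count_space UNIV) (\<lambda>(b, t, i). if b then tau t i else s t i) (UNIV \<times> UNIV \<times> {..<n})"
      by (rule assms(13))
  qed
  show ?thesis using main unfolding LHSq_def Yq_def Rq_def by simp
qed

end
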